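(* Let $A\in\mathbb{Z}^{m\times n}$ have full column rank, $b\in\mathbb{Z}^m$, $P=P(A,b)=\{x\in\mathbb{R}^n: Ax\le b\}$, and let $\alpha\in\mathbb{Z}^n$ be nonzero. Suppose $P\cap\mathbb{Z}^n=\{0\}$. Then $\operatorname{prox}_1(A,b,\alpha)<1$ and $\operatorname{prox}_2(A,b,\alpha)<1$.
   Context: For $I\subseteq[m]$, $A_I$ denotes the rows of $A$ indexed by $I$; $\ker A_\emptyset=\mathbb{R}^n$. For $I$ with $|I|\le n-1$ and $\operatorname{rank}A_I=|I|$, $P_I=P\cap\ker A_I$. $\gcd A_I$ is the gcd of the absolute values of all $\operatorname{rank}(A_I)\times\operatorname{rank}(A_I)$ minors of $A_I$ ($\gcd A_\emptyset=1$). $\Delta^\alpha_I(A)=\frac{1}{\gcd A_I}\max\left\{\left|\det\begin{pmatrix}\alpha^\top\\ A_K\end{pmatrix}\right|: I\subseteq K\subseteq[m],\ |K|=n-1\right\}$. $\operatorname{prox}_I(A,b,\alpha)$ is the number with $\max_{x\in P_I}\alpha^\top x=\operatorname{prox}_I(A,b,\alpha)\Delta^\alpha_I(A)$, and $\operatorname{prox}_d(A,b,\alpha)=\max\{\operatorname{prox}_I(A,b,\alpha):\dim P_I=d\}$. *)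

theory Defs
  imports "HOL-Analysis.Analysis" "HOL-Combinatorics.Permutations"
begin

definition realM :: "int^'n^'m \<Rightarrow> real^'n^'m" where
  "realM A = (\<chi> i j. real_of_int (A $ i $ j))"

definition realV :: "int^'n \<Rightarrow> real^'n" where
  "realV v = (\<chi> j. real_of_int (v $ j))"

definition polyP :: "int^'n^'m \<Rightarrow> int^'m \<Rightarrow> (real^'n) set" where
  "polyP A b = {x. \<forall>i. row i (realM A) \<bullet> x \<le> real_of_int (b $ i)}"

definition kerRows :: "int^'n^'m \<Rightarrow> 'm set \<Rightarrow> (real^'n) set" where
  "kerRows A I = {x. \<forall>i\<in>I. row i (realM A) \<bullet> x = 0}"

definition faceP :: "int^'n^'m \<Rightarrow> int^'m \<Rightarrow> 'm set \<Rightarrow> (real^'n) set" where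
  "faceP A b I = polyP A b \<inter> kerRows A I"

definition rankRows :: "int^'n^'m \<Rightarrow> 'm set \<Rightarrow> nat" where
  "rankRows A I = dim ((\<lambda>i. row i (realM A)) ` I)"

definition ldet :: "nat \<Rightarrow> (nat \<Rightarrow> nat \<Rightarrow> int) \<Rightarrow> int" where
  "ldet k M = (\<Sum>p | p permutes {..<k}. sign p * (\<Prod>i<k. M i (p i)))"

text \<open>An enumeration of a finite set (arbitrary order; only absolute values of
  determinants are used, which do not depend on the chosen orders).\<close>
definition enum_set :: "'a set \<Rightarrow> nat \<Rightarrow> 'a" where
  "enum_set S = (SOME f. bij_betw f {..<card S} S)"

definition absMinor :: "int^'n^'m \<Rightarrow> 'm set \<Rightarrow> 'n set \<Rightarrow> int" where
  "absMinor A R C = \<bar>ldet (card R) (\<lambda>i j. A $ enum_set R i $ enum_set C j)\<bar>"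

text \<open>gcd A_I: gcd of the absolute values of all rank(A_I) x rank(A_I) minors of A_I
  (for I = {} this is the gcd of the single empty minor 1, i.e. 1).\<close>
definition gcdRows :: "int^'n^'m \<Rightarrow> 'm set \<Rightarrow> int" where
  "gcdRows A I = Gcd {absMinor A R C | R C. R \<subseteq> I \<and> card R = rankRows A I
                                         \<and> card C = rankRows A I}"

definition absDetAlphaRows :: "int^'n \<Rightarrow> int^'n^'m \<Rightarrow> 'm set \<Rightarrow> int" where
  "absDetAlphaRows \<alpha> A K =
     \<bar>ldet CARD('n) (\<lambda>i j. if i = 0 then \<alpha> $ enum_set (UNIV::'n set) j
                            else A $ enum_set K (i - 1) $ enum_set (UNIV::'n set) j)\<bar>"

definition DeltaI :: "int^'n \<Rightarrow> int^'n^'m \<Rightarrow> 'm set \<Rightarrow> real" where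
  "DeltaI \<alpha> A I =
     real_of_int (Max {absDetAlphaRows \<alpha> A K | K. I \<subseteq> K \<and> card K = CARD('n) - 1})
       / real_of_int (gcdRows A I)"

definition admissible :: "int^'n^'m \<Rightarrow> 'm set \<Rightarrow> bool" where
  "admissible A I \<longleftrightarrow> card I \<le> CARD('n) - 1 \<and> rankRows A I = card I"

definition is_proxI :: "int^'n^'m \<Rightarrow> int^'m \<Rightarrow> int^'n \<Rightarrow> 'm set \<Rightarrow> real \<Rightarrow> bool" where
  "is_proxI A b \<alpha> I p \<longleftrightarrow>
     (\<exists>x\<in>faceP A b I. realV \<alpha> \<bullet> x = p * DeltaI \<alpha> A I) \<and>
     (\<forall>y\<in>faceP A b I. realV \<alpha> \<bullet> y \<le> p * DeltaI \<alpha> A I)"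

definition prox_lt_one :: "int^'n^'m \<Rightarrow> int^'m \<Rightarrow> int^'n \<Rightarrow> int \<Rightarrow> bool" where
  "prox_lt_one A b \<alpha> d \<longleftrightarrow>
     (\<forall>I. admissible A I \<and> aff_dim (faceP A b I) = d \<longrightarrow>
          (\<exists>p. is_proxI A b \<alpha> I p \<and> p < 1))"

end

theory Submission
  imports Defs "Jordan_Normal_Form.Determinant" "HOL-Analysis.Kronecker_Approximation_Theorem"
begin


no_notation vec_index (infixl "$" 100)
no_notation scalar_prod (infix "\<bullet>" 70)
hide_const (open) Matrix.orthogonal

lemma ldet_det: "ldet k M = det (mat k k (\<lambda>(i,j). M i j))"
proof -
  have "det (mat k k (\<lambda>(i,j). M i j)) = (\<Sum> p \<in> {p. p permutes {0 ..< k}}. 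
     signof p * (\<Prod> i = 0 ..< k. (mat k k (\<lambda>(i,j). M i j)) $$ (i, p i)))"
    by (rule det_def') auto
  also have "\<dots> = (\<Sum>p | p permutes {..<k}. sign p * (\<Prod>i<k. M i (p i)))"
  proof (rule sum.cong)
    show "{p. p permutes {0..<k}} = {p. p permutes {..<k}}" by (simp add: atLeast0LessThan)
  next
    fix p assume "p \<in> {p. p permutes {..<k}}"
    then have p: "p permutes {..<k}" by simp
    have "(\<Prod> i = 0 ..< k. (mat k k (\<lambda>(i,j). M i j)) $$ (i, p i)) = (\<Prod>i<k. M i (p i))"
      using permutes_in_image[OF p] by (auto simp: atLeast0LessThan intro!: prod.cong)
    then show "signof p * (\<Prod> i = 0 ..< k. (mat k k (\<lambda>(i,j). M i j)) $$ (i, p i)) = sign p * (\<Prod>i<k. M i (p i))"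
      by simp
  qed
  finally show ?thesis unfolding ldet_def by simp
qed

lemma enum_set_bij: assumes "finite S" shows "bij_betw (enum_set S) {..<card S} S"
proof -
  have "\<exists>f. bij_betw f {..<card S} S"
    using ex_bij_betw_nat_finite[OF assms] by (simp add: atLeast0LessThan)
  then show ?thesis unfolding enum_set_def by (rule someI_ex)
qed

definition en :: "nat \<Rightarrow> 'n::finite" where "en = enum_set (UNIV::'n set)"
definition eninv :: "'n::finite \<Rightarrow> nat" where "eninv = inv_into {..<CARD('n)} en"

lemma en_bij: "bij_betw (en::nat \<Rightarrow> 'n::finite) {..<CARD('n)} UNIV"
  unfolding en_def by (rule enum_set_bij) simp

lemma eninv_less[simp]: "eninv (k::'n::finite) < CARD('n)"
  using en_bij[where 'n='n] unfolding eninv_def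
  by (metis UNIV_I bij_betw_def inv_into_into lessThan_iff)

lemma en_eninv[simp]: "en (eninv (k::'n::finite)) = k"
  using en_bij[where 'n='n] unfolding eninv_def
  by (simp add: bij_betw_def f_inv_into_f)

lemma eninv_en[simp]: "j < CARD('n::finite) \<Longrightarrow> eninv (en j :: 'n) = j"
  using en_bij[where 'n='n] unfolding eninv_def
  by (simp add: bij_betw_def)

lemma en_inj: "i < CARD('n::finite) \<Longrightarrow> j < CARD('n) \<Longrightarrow> (en i :: 'n) = en j \<longleftrightarrow> i = j"
  by (metis eninv_en)

lemma sum_en: "(\<Sum>j<CARD('n::finite). f (en j :: 'n)) = (\<Sum>k\<in>UNIV. f k)"
  using sum.reindex_bij_betw[OF en_bij[where 'n='n], of f] by simp

definition dm :: "(int^'n::finite) list \<Rightarrow> int mat" where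
  "dm rs = mat CARD('n) CARD('n) (\<lambda>(i,j). rs!i $ en j)"

definition dl :: "(int^'n::finite) list \<Rightarrow> int" where "dl rs = det (dm rs)"

definition idot :: "int^'n::finite \<Rightarrow> int^'n \<Rightarrow> int" where
  "idot x y = (\<Sum>k\<in>UNIV. x $ k * y $ k)"

lemma dm_carrier[simp]: "dm (rs::(int^'n::finite) list) \<in> carrier_mat CARD('n) CARD('n)"
  unfolding dm_def by simp

lemma dl_perm:
  fixes rs :: "(int^'n::finite) list"
  assumes len: "length rs = CARD('n)" and ms: "mset rs' = mset rs"
  shows "\<bar>dl rs'\<bar> = \<bar>dl rs\<bar>"
proof -
  obtain p where p: "p permutes {..<length rs}" and pl: "permute_list p rs = rs'"
    using mset_eq_permutation[OF ms] by blast
  have p': "p permutes {0..<CARD('n)}" using p len by (simp add: atLeast0LessThan)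
  have "dm rs' = mat CARD('n) CARD('n) (\<lambda>(i,j). dm rs $$ (p i, j))"
  proof (rule eq_matI)
    fix i j assume ij: "i < dim_row (mat CARD('n) CARD('n) (\<lambda>(i,j). dm rs $$ (p i, j)))"
      "j < dim_col (mat CARD('n) CARD('n) (\<lambda>(i,j). dm rs $$ (p i, j)))"
    then have i: "i < CARD('n)" and j: "j < CARD('n)" by auto
    have pi: "p i < CARD('n)" using permutes_in_image[OF p] i len by simp
    have "rs' ! i = rs ! p i" unfolding pl[symmetric] permute_list_def using i len by simp
    then show "dm rs' $$ (i, j) = mat CARD('n) CARD('n) (\<lambda>(i,j). dm rs $$ (p i, j)) $$ (i, j)"
      using i j pi by (simp add: dm_def)
  qed (simp_all add: dm_def)
  then have "dl rs' = signof p * dl rs"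
    unfolding dl_def using det_permute_rows[OF dm_carrier p'] by simp
  then show ?thesis by (simp add: abs_mult sign_def)
qed

definition cv :: "(int^'n::finite) list \<Rightarrow> nat \<Rightarrow> int^'n" where
  "cv rs i = (\<chi> k. cofactor (dm rs) i (eninv k))"

lemma dl_linear:
  fixes rs :: "(int^'n::finite) list"
  assumes len: "length rs = CARD('n)" and i: "i < CARD('n)"
  shows "dl (rs[i := y]) = idot (cv rs i) y"
proof -
  have md: "mat_delete (dm (rs[i := y])) i j = mat_delete (dm rs) i j" for j
    unfolding mat_delete_def dm_def using len i
    by (intro eq_matI) (auto simp: nth_list_update)
  have "dl (rs[i := y]) = (\<Sum>j<CARD('n). dm (rs[i := y]) $$ (i,j) * cofactor (dm (rs[i := y])) i j)"
    unfolding dl_def by (rule laplace_expansion_row[OF dm_carrier i])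
  also have "\<dots> = (\<Sum>j<CARD('n). y $ en j * cofactor (dm rs) i j)"
  proof (intro sum.cong refl)
    fix j assume "j \<in> {..<CARD('n)}"
    then have "dm (rs[i := y]) $$ (i,j) = y $ en j" using len i by (simp add: dm_def)
    then show "dm (rs[i := y]) $$ (i,j) * cofactor (dm (rs[i := y])) i j = y $ en j * cofactor (dm rs) i j"
      unfolding cofactor_def md by simp
  qed
  also have "\<dots> = (\<Sum>k\<in>UNIV. y $ k * cofactor (dm rs) i (eninv k))"
    by (subst sum_en[symmetric]) (auto intro!: sum.cong)
  also have "\<dots> = idot (cv rs i) y" unfolding idot_def cv_def by (simp add: mult.commute)
  finally show ?thesis .
qed

lemma dl_cv: 
  fixes rs :: "(int^'n::finite) list"
  assumes len: "length rs = CARD('n)" and i: "i < CARD('n)"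
  shows "dl (rs[i := y]) = idot (cv rs i) y" "cv (rs[i := z]) i = cv rs i"
proof -
  show "dl (rs[i := y]) = idot (cv rs i) y" by (rule dl_linear[OF assms])
  have md: "mat_delete (dm (rs[i := z])) i j = mat_delete (dm rs) i j" for j
    unfolding mat_delete_def dm_def using len i
    by (intro eq_matI) (auto simp: nth_list_update)
  show "cv (rs[i := z]) i = cv rs i" unfolding cv_def cofactor_def md ..
qed

lemma dl_eq_rows:
  fixes rs :: "(int^'n::finite) list"
  assumes len: "length rs = CARD('n)" and "i < CARD('n)" "j < CARD('n)" "i \<noteq> j" "rs!i = rs!j"
  shows "dl rs = 0"
  unfolding dl_def
  by (rule det_identical_rows[OF dm_carrier assms(4,2,3)]) (use assms in \<open>auto simp: dm_def intro!: eq_vecI\<close>)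


lemma realV_nth[simp]: "realV v $ k = real_of_int (v $ k)"
  unfolding realV_def by simp

lemma dl_zero_dep:
  fixes rs :: "(int^'n::finite) list"
  assumes len: "length rs = CARD('n)" and z: "dl rs = 0"
  shows "\<exists>c. (\<exists>i<CARD('n). c i \<noteq> 0) \<and> (\<Sum>i<CARD('n). c i *\<^sub>R realV (rs!i)) = 0"
proof -
  let ?n = "CARD('n)"
  let ?R = "map_mat real_of_int (dm rs)"
  have Rc: "?R \<in> carrier_mat ?n ?n" by simp
  have "det ?R = 0" using z unfolding dl_def by simp
  then have "det (transpose_mat ?R) = 0" using det_transpose[OF Rc] by simp
  then obtain v where v: "v \<in> carrier_vec ?n" "v \<noteq> 0\<^sub>v ?n" "transpose_mat ?R *\<^sub>v v = 0\<^sub>v ?n"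
    using det_0_iff_vec_prod_zero_field[of "transpose_mat ?R" ?n] Rc by auto
  define c where "c i = vec_index v i" for i
  have ex: "\<exists>i<?n. c i \<noteq> 0"
  proof (rule ccontr)
    assume "\<not> ?thesis"
    then have "v = 0\<^sub>v ?n" using v(1) unfolding c_def by (intro eq_vecI) auto
    with v(2) show False by simp
  qed
  have comp: "(\<Sum>i<?n. c i *\<^sub>R realV (rs!i)) $ k = 0" for k
  proof -
    have "vec_index (transpose_mat ?R *\<^sub>v v) (eninv k) = 0" using v(3) by simp
    moreover have "vec_index (transpose_mat ?R *\<^sub>v v) (eninv k) = (\<Sum>i<?n. real_of_int (rs!i $ k) * c i)"
      using v(1) len by (simp add: scalar_prod_def dm_def c_def atLeast0LessThan)
    moreover have "(\<Sum>i<?n. c i *\<^sub>R realV (rs!i)) $ k = (\<Sum>i<?n. real_of_int (rs!i $ k) * c i)"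
      by (simp add: sum_component mult.commute)
    ultimately show ?thesis by simp
  qed
  have "(\<Sum>i<?n. c i *\<^sub>R realV (rs!i)) = 0"
  proof (rule Finite_Cartesian_Product.vec_eq_iff[THEN iffD2], rule allI)
    fix k show "(\<Sum>i<?n. c i *\<^sub>R realV (rs!i)) $ k = 0 $ k" using comp[of k] by (simp only: zero_index)
  qed
  with ex show ?thesis by blast
qed


lemma inj_realV: "inj realV"
  by (rule injI) (simp add: Finite_Cartesian_Product.vec_eq_iff)

lemma bij_nth: "distinct L \<Longrightarrow> bij_betw (nth L) {..<length L} (set L)"
  unfolding bij_betw_def by (auto simp: inj_on_nth set_conv_nth)

definition iu :: "'n::finite \<Rightarrow> int^'n" where "iu k = (\<chi> l. if l = k then 1 else 0)"

lemma realV_iu: "realV (iu k) = axis k 1"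
  by (simp add: Finite_Cartesian_Product.vec_eq_iff iu_def axis_def)

lemma dl_extend:
  fixes xs :: "(int^'n::finite) list"
  assumes dxs: "distinct xs" and ind: "independent (realV ` set xs)"
  shows "\<exists>ys. length (xs @ ys) = CARD('n) \<and> dl (xs @ ys) \<noteq> 0"
proof -
  let ?S = "realV ` set xs"
  obtain B where B: "?S \<subseteq> B" "B \<subseteq> ?S \<union> Basis" "independent B" "?S \<union> Basis \<subseteq> span B"
    using maximal_independent_subset_extend[of ?S "?S \<union> Basis"] ind by blast
  have spB: "span B = UNIV"
    using B(4) span_Basis span_mono[of Basis "span B"] by (auto simp: span_span)
  have finB: "finite B" using B(3) by (simp add: independent_imp_finite)
  have cardB: "card B = CARD('n)"
    using dim_eq_card_independent[OF B(3)] dim_span[of B] spB by (simp add: dim_UNIV)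
  define Y where "Y = {iu k | k. axis k 1 \<in> B - ?S}"
  have finY: "finite Y" unfolding Y_def by simp
  obtain ys where ys: "distinct ys" "set ys = Y" using finite_distinct_list[OF finY] by blast
  have imY: "realV ` Y = B - ?S"
  proof
    show "realV ` Y \<subseteq> B - ?S" unfolding Y_def by (auto simp: realV_iu)
    show "B - ?S \<subseteq> realV ` Y"
    proof
      fix b assume b: "b \<in> B - ?S"
      then have "b \<in> Basis" using B(2) by auto
      then obtain k where k: "b = axis k 1" unfolding Basis_vec_def by auto
      then have "iu k \<in> Y" using b unfolding Y_def by auto
      then show "b \<in> realV ` Y" using k realV_iu by (metis image_eqI)
    qed
  qed
  let ?L = "xs @ ys"
  have imL: "realV ` set ?L = B" using imY B(1) ys(2) by auto
  have disj: "set xs \<inter> set ys = {}"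
  proof -
    have "realV ` set xs \<inter> realV ` set ys = {}" using imY ys(2) by auto
    then show ?thesis by auto
  qed
  have dL: "distinct ?L" using dxs ys(1) disj by simp
  have lenL: "length ?L = CARD('n)"
  proof -
    have "length ?L = card (set ?L)" using distinct_card[OF dL] by simp
    also have "\<dots> = card (realV ` set ?L)" using inj_realV by (metis card_image inj_on_subset subset_UNIV)
    finally show ?thesis using imL cardB by simp
  qed
  have "dl ?L \<noteq> 0"
  proof
    assume "dl ?L = 0"
    then obtain c where c: "\<exists>i<CARD('n). c i \<noteq> 0" "(\<Sum>i<CARD('n). c i *\<^sub>R realV (?L!i)) = 0"
      using dl_zero_dep[OF lenL] by blast
    define L' where "L' = map realV ?L"
    have dL': "distinct L'" unfolding L'_def using dL inj_realV by (metis distinct_map inj_on_subset subset_UNIV)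
    have bL': "bij_betw (nth L') {..<CARD('n)} B"
    proof -
      have "set L' = B" using imL unfolding L'_def by (simp add: image_Un)
      moreover have "length L' = CARD('n)" using lenL unfolding L'_def by simp
      ultimately show ?thesis using bij_nth[OF dL'] by simp
    qed
    define u where "u v = c (inv_into {..<CARD('n)} (nth L') v)" for v
    have "(\<Sum>v\<in>B. u v *\<^sub>R v) = (\<Sum>i<CARD('n). u (L'!i) *\<^sub>R (L'!i))"
      using sum.reindex_bij_betw[OF bL', of "\<lambda>v. u v *\<^sub>R v"] by simp
    also have "\<dots> = (\<Sum>i<CARD('n). c i *\<^sub>R realV (?L!i))"
    proof (rule sum.cong[OF refl])
      fix i assume i: "i \<in> {..<CARD('n)}"
      have inv: "inv_into {..<CARD('n)} (nth L') (L'!i) = i"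
        using bL' i by (simp add: bij_betw_def inv_into_f_f)
      have Li: "L'!i = realV (?L!i)" unfolding L'_def using i lenL by (intro nth_map) simp
      show "u (L'!i) *\<^sub>R (L'!i) = c i *\<^sub>R realV (?L!i)"
        unfolding u_def inv by (simp only: Li)
    qed
    finally have s0: "(\<Sum>v\<in>B. u v *\<^sub>R v) = 0" using c(2) by simp
    obtain i where i: "i < CARD('n)" "c i \<noteq> 0" using c(1) by blast
    have "L'!i \<in> B" using bL' i by (auto simp: bij_betw_def)
    moreover have "u (L'!i) \<noteq> 0"
      using bL' i by (simp add: u_def bij_betw_def inv_into_f_f)
    ultimately have "dependent B" using s0 finB
      by (subst real_vector.dependent_finite) auto
    with B(3) show False by simp
  qed
  with lenL show ?thesis by blast
qed


lemma FG_mat: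
  fixes G :: int
  assumes "B \<in> carrier_mat (t + d) (t + d)"
    and "\<And>f. inj_on f {..<t} \<Longrightarrow> f ` {..<t} \<subseteq> {..<t + d} \<Longrightarrow> G dvd det (mat t t (\<lambda>(i,j). B $$ (i, f j)))"
  shows "G dvd det B"
  using assms
proof (induction d arbitrary: B)
  case 0
  have "mat t t (\<lambda>(i,j). B $$ (i, id j)) = B" using 0(1) by (intro eq_matI) auto
  then show ?case using 0(2)[of id] by simp
next
  case (Suc d)
  let ?k = "t + d"
  have Bc: "B \<in> carrier_mat (Suc ?k) (Suc ?k)" using Suc(2) by simp
  have lap: "det B = (\<Sum>j<Suc ?k. B $$ (?k,j) * cofactor B ?k j)"
    by (rule laplace_expansion_row[OF Bc]) simp
  have "G dvd det (mat_delete B ?k j)" if j: "j < Suc ?k" for j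
  proof (rule Suc.IH)
    show "mat_delete B ?k j \<in> carrier_mat (t + d) (t + d)" using mat_delete_carrier[OF Bc] by simp
  next
    fix f assume f: "inj_on f {..<t}" "f ` {..<t} \<subseteq> {..<t + d}"
    define f' where "f' x = (if f x < j then f x else Suc (f x))" for x
    have "inj_on f' {..<t}" using f(1) unfolding f'_def inj_on_def by auto
    moreover have "f' ` {..<t} \<subseteq> {..<t + Suc d}" using f(2) unfolding f'_def by auto
    ultimately have "G dvd det (mat t t (\<lambda>(i,j). B $$ (i, f' j)))" by (rule Suc.prems(2))
    moreover have "mat t t (\<lambda>(i,j'). mat_delete B ?k j $$ (i, f j')) = mat t t (\<lambda>(i,j). B $$ (i, f' j))"
    proof (rule eq_matI)
      fix i j' assume "i < dim_row (mat t t (\<lambda>(i,j). B $$ (i, f' j)))" "j' < dim_col (mat t t (\<lambda>(i,j). B $$ (i, f' j)))"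
      then have ij: "i < t" "j' < t" by auto
      then have "f j' < t + d" using f(2) by auto
      then show "mat t t (\<lambda>(i,j'). mat_delete B ?k j $$ (i, f j')) $$ (i, j') = mat t t (\<lambda>(i,j). B $$ (i, f' j)) $$ (i, j')"
        using ij Bc unfolding mat_delete_def f'_def by auto
    qed auto
    ultimately show "G dvd det (mat t t (\<lambda>(i,j'). mat_delete B ?k j $$ (i, f j')))" by simp
  qed
  then show ?case unfolding lap cofactor_def by (intro dvd_sum) auto
qed

lemma det_permute_cols:
  assumes X: "X \<in> carrier_mat t t" and p: "p permutes {0..<t}"
  shows "det (mat t t (\<lambda>(i,j). X $$ (i, p j))) = signof p * det X"
proof -
  have XT: "transpose_mat X \<in> carrier_mat t t" using X by simp
  have "mat t t (\<lambda>(i,j). X $$ (i, p j)) = transpose_mat (mat t t (\<lambda>(i,j). transpose_mat X $$ (p i, j)))"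
    using X permutes_in_image[OF p] by (intro eq_matI) auto
  then have "det (mat t t (\<lambda>(i,j). X $$ (i, p j))) = det (mat t t (\<lambda>(i,j). transpose_mat X $$ (p i, j)))"
    by (metis det_transpose mat_carrier)
  also have "\<dots> = signof p * det (transpose_mat X)" by (rule det_permute_rows[OF XT p])
  also have "\<dots> = signof p * det X" using det_transpose[OF X] by simp
  finally show ?thesis .
qed

definition Irows :: "int^'n^'m \<Rightarrow> 'm set \<Rightarrow> (int^'n) list" where
  "Irows A I = map (\<lambda>i. A $ enum_set I i) [0..<card I]"

lemma admissible_rank: "admissible A I \<Longrightarrow> rankRows A I = card I"
  unfolding admissible_def by simp

lemma FG_list:
  fixes A :: "int^'n::finite^'m::finite"
  assumes adm: "admissible A I" and len: "length rs = CARD('n)"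
    and pre: "\<And>i. i < card I \<Longrightarrow> rs ! i = A $ enum_set I i"
  shows "gcdRows A I dvd dl rs"
proof -
  let ?t = "card I" and ?n = "CARD('n)" and ?G = "gcdRows A I"
  have tn: "?t \<le> ?n" using adm unfolding admissible_def by linarith
  have eq: "?n = ?t + (?n - ?t)" using tn by simp
  have Bc: "dm rs \<in> carrier_mat (?t + (?n - ?t)) (?t + (?n - ?t))" using eq dm_carrier[of rs] by simp
  show ?thesis unfolding dl_def
  proof (rule FG_mat[OF Bc])
    fix f assume f: "inj_on f {..<?t}" "f ` {..<?t} \<subseteq> {..<?t + (?n - ?t)}"
    then have fn: "f ` {..<?t} \<subseteq> {..<?n}" using tn by simp
    define C :: "'n set" where "C = ((en::nat\<Rightarrow>'n) \<circ> f) ` {..<?t}"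
    have injC: "inj_on ((en::nat\<Rightarrow>'n) \<circ> f) {..<?t}"
    proof (rule inj_onI)
      fix x y assume xy: "x \<in> {..<?t}" "y \<in> {..<?t}" "((en::nat\<Rightarrow>'n) \<circ> f) x = ((en::nat\<Rightarrow>'n) \<circ> f) y"
      then have "f x < ?n" "f y < ?n" using fn by auto
      then have "f x = f y" using xy(3) en_inj[where 'n='n] by auto
      then show "x = y" using f(1) xy(1,2) by (auto simp: inj_on_def)
    qed
    have cardC: "card C = ?t" unfolding C_def using card_image[OF injC] by simp
    have bC: "bij_betw (enum_set C) {..<?t} C" using enum_set_bij[of C] cardC by simp
    have bF: "bij_betw ((en::nat\<Rightarrow>'n) \<circ> f) {..<?t} C" using injC unfolding C_def bij_betw_def by simp
    define p where "p j = (if j < ?t then inv_into {..<?t} (enum_set C) (((en::nat\<Rightarrow>'n) \<circ> f) j) else j)" for j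
    have pb: "bij_betw p {..<?t} {..<?t}"
    proof -
      have "bij_betw (inv_into {..<?t} (enum_set C) \<circ> ((en::nat\<Rightarrow>'n) \<circ> f)) {..<?t} {..<?t}"
        by (rule bij_betw_trans[OF bF bij_betw_inv_into[OF bC]])
      then show ?thesis unfolding p_def by (rule bij_betw_cong[THEN iffD1, rotated]) auto
    qed
    have pp: "p permutes {0..<?t}"
      using pb unfolding atLeast0LessThan by (intro bij_imp_permutes) (auto simp: p_def)
    have pf: "enum_set C (p j) = en (f j)" if "j < ?t" for j
      using that bC bF unfolding p_def bij_betw_def by (auto simp: f_inv_into_f)
    define X where "X = mat ?t ?t (\<lambda>(i,j). A $ enum_set I i $ enum_set C j)"
    have Xc: "X \<in> carrier_mat ?t ?t" unfolding X_def by simp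
    have "mat ?t ?t (\<lambda>(i,j). dm rs $$ (i, f j)) = mat ?t ?t (\<lambda>(i,j). X $$ (i, p j))"
    proof (rule eq_matI)
      fix i j assume "i < dim_row (mat ?t ?t (\<lambda>(i,j). X $$ (i, p j)))" "j < dim_col (mat ?t ?t (\<lambda>(i,j). X $$ (i, p j)))"
      then have ij: "i < ?t" "j < ?t" by auto
      have "p j < ?t" using pb ij by (auto simp: bij_betw_def)
      moreover have "f j < ?n" using fn ij by auto
      moreover have "i < ?n" using ij tn by simp
      ultimately show "mat ?t ?t (\<lambda>(i,j). dm rs $$ (i, f j)) $$ (i, j) = mat ?t ?t (\<lambda>(i,j). X $$ (i, p j)) $$ (i, j)"
        using ij pf[of j] pre[of i] unfolding X_def dm_def by simp
    qed auto
    then have "\<bar>det (mat ?t ?t (\<lambda>(i,j). dm rs $$ (i, f j)))\<bar> = \<bar>det X\<bar>"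
      using det_permute_cols[OF Xc pp] by (simp add: abs_mult sign_def)
    also have "\<dots> = absMinor A I C" unfolding absMinor_def X_def ldet_det by simp
    finally have e: "\<bar>det (mat ?t ?t (\<lambda>(i,j). dm rs $$ (i, f j)))\<bar> = absMinor A I C" .
    have "absMinor A I C \<in> {absMinor A R C | R C. R \<subseteq> I \<and> card R = rankRows A I \<and> card C = rankRows A I}"
      using cardC admissible_rank[OF adm] by (intro CollectI exI[of _ I] exI[of _ C]) simp
    then have "?G dvd absMinor A I C" unfolding gcdRows_def by (rule Gcd_dvd)
    then show "?G dvd det (mat ?t ?t (\<lambda>(i,j). dm rs $$ (i, f j)))" using e by (metis dvd_abs_iff)
  qed
qed

lemma FG:
  fixes A :: "int^'n::finite^'m::finite"
  assumes adm: "admissible A I" and len: "length (Irows A I @ ys) = CARD('n)"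
    and ms: "mset rs = mset (Irows A I @ ys)"
  shows "gcdRows A I dvd dl rs"
proof -
  have "gcdRows A I dvd dl (Irows A I @ ys)"
    by (rule FG_list[OF adm len]) (simp add: Irows_def nth_append)
  then show ?thesis using dl_perm[OF len ms] by (metis dvd_abs_iff)
qed




abbreviation rowv :: "int^'n::finite^'m::finite \<Rightarrow> 'm \<Rightarrow> real^'n" where
  "rowv A i \<equiv> realV (A $ i)"

lemma row_realM: "Finite_Cartesian_Product.row i (realM A) = realV (A $ i)"
  by (simp add: Finite_Cartesian_Product.row_def realM_def realV_def)

lemma polyP_iff: "x \<in> polyP A b \<longleftrightarrow> (\<forall>i. rowv A i \<bullet> x \<le> real_of_int (b $ i))"
  unfolding polyP_def row_realM by simp

lemma kerRows_iff: "x \<in> kerRows A I \<longleftrightarrow> (\<forall>i\<in>I. rowv A i \<bullet> x = 0)"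
  unfolding kerRows_def row_realM by simp

lemma faceP_iff: "x \<in> faceP A b I \<longleftrightarrow> (\<forall>i. rowv A i \<bullet> x \<le> real_of_int (b $ i)) \<and> (\<forall>i\<in>I. rowv A i \<bullet> x = 0)"
  unfolding faceP_def Int_iff polyP_iff kerRows_iff ..

lemma realV_inner: "realV x \<bullet> realV y = real_of_int (idot x y)"
  unfolding inner_vec_def idot_def by simp

lemma rankRows_alt: "rankRows A I = dim (rowv A ` I)"
  unfolding rankRows_def row_realM ..

lemma subspace_kerRows: "subspace (kerRows A K)"
  unfolding subspace_def by (auto simp: kerRows_iff inner_add_right)


lemma adm_indep:
  fixes A :: "int^'n::finite^'m::finite"
  assumes adm: "admissible A I"
  shows "inj_on (rowv A) I" "independent (rowv A ` I)"
proof -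
  have fin: "finite I" by simp
  have d: "dim (rowv A ` I) = card I" using adm unfolding admissible_def rankRows_alt by simp
  have "dim (rowv A ` I) \<le> card (rowv A ` I)" by (rule dim_le_card) (auto intro: span_base)
  moreover have "card (rowv A ` I) \<le> card I" by (rule card_image_le[OF fin])
  ultimately have c: "card (rowv A ` I) = card I" using d by simp
  show "inj_on (rowv A) I" by (rule eq_card_imp_inj_on[OF fin c])
  show "independent (rowv A ` I)"
    by (rule card_le_dim_spanning[of _ "rowv A ` I"]) (use c d in \<open>auto intro: span_base\<close>)
qed

lemma inj_rows_from_rowv: "inj_on (rowv A) K \<Longrightarrow> inj_on (\<lambda>i. A $ i) K"
  unfolding inj_on_def by auto

lemma interior_point:
  fixes A :: "int^'n::finite^'m::finite" and b :: "int^'m" and I :: "'m set"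
  assumes b0: "\<And>i. 0 \<le> b $ i"
  defines "F \<equiv> faceP A b I"
  defines "E \<equiv> {k. \<forall>x\<in>F. rowv A k \<bullet> x = 0}"
  shows "\<exists>x0\<in>F. \<forall>k. k \<notin> E \<longrightarrow> rowv A k \<bullet> x0 < real_of_int (b $ k)"
proof -
  let ?N = "- E"
  have "\<forall>k\<in>?N. \<exists>x\<in>F. rowv A k \<bullet> x \<noteq> 0" unfolding E_def by auto
  then obtain xk where xk: "\<And>k. k \<in> ?N \<Longrightarrow> xk k \<in> F \<and> rowv A k \<bullet> xk k \<noteq> 0" by metis
  define c :: real where "c = 1 / (2 * card ?N)"
  have c0: "c \<ge> 0" unfolding c_def by simp
  define x0 where "x0 = (\<Sum>k\<in>?N. c *\<^sub>R xk k)"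
  have ix0: "rowv A i \<bullet> x0 = c * (\<Sum>k\<in>?N. rowv A i \<bullet> xk k)" for i
    unfolding x0_def by (simp add: inner_sum_right sum_distrib_left)
  have le: "rowv A i \<bullet> xk k \<le> real_of_int (b $ i)" if "k \<in> ?N" for i k
    using xk[OF that] unfolding F_def faceP_iff by auto
  have half: "rowv A i \<bullet> x0 \<le> real_of_int (b $ i) / 2" if "?N \<noteq> {}" for i
  proof -
    have fN: "finite ?N" by simp
    have cN: "card ?N > 0" using that fN card_gt_0_iff by blast
    have "(\<Sum>k\<in>?N. rowv A i \<bullet> xk k) \<le> (\<Sum>k\<in>?N. real_of_int (b $ i))" by (rule sum_mono) (rule le)
    then have "(\<Sum>k\<in>?N. rowv A i \<bullet> xk k) \<le> card ?N * real_of_int (b $ i)" by simp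
    then have "c * (\<Sum>k\<in>?N. rowv A i \<bullet> xk k) \<le> c * (card ?N * real_of_int (b $ i))"
      using c0 by (intro mult_left_mono)
    also have "\<dots> = real_of_int (b $ i) / 2" unfolding c_def using cN that by simp
    finally show ?thesis using ix0 by simp
  qed
  have x0F: "x0 \<in> F"
    unfolding F_def faceP_iff
  proof (intro conjI allI ballI)
    fix i
    show "rowv A i \<bullet> x0 \<le> real_of_int (b $ i)"
    proof (cases "?N = {}")
      case True then show ?thesis using b0[of i] unfolding x0_def by simp
    next
      case False then show ?thesis using half[OF False, of i] b0[of i] by linarith
    qed
  next
    fix i assume "i \<in> I"
    then have "rowv A i \<bullet> xk k = 0" if "k \<in> ?N" for k using xk[OF that] unfolding F_def faceP_iff by auto
    then show "rowv A i \<bullet> x0 = 0" unfolding ix0 by simp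
  qed
  have "rowv A k \<bullet> x0 < real_of_int (b $ k)" if k: "k \<notin> E" for k
  proof -
    have kN: "k \<in> ?N" using k by simp
    then have Nne: "?N \<noteq> {}" by blast
    show ?thesis
    proof (cases "b $ k > 0")
      case True then show ?thesis using half[OF Nne, of k] by simp
    next
      case False
      then have bk: "b $ k = 0" using b0[of k] by simp
      have nonpos: "rowv A k \<bullet> xk l \<le> 0" if "l \<in> ?N" for l using le[OF that, of k] bk by simp
      have neg: "rowv A k \<bullet> xk k < 0" using nonpos[OF kN] xk[OF kN] by linarith
      have "(\<Sum>l\<in>?N. rowv A k \<bullet> xk l) = rowv A k \<bullet> xk k + (\<Sum>l\<in>?N - {k}. rowv A k \<bullet> xk l)"
        using kN by (simp add: sum.remove)
      also have "\<dots> < 0" using neg sum_nonpos[of "?N - {k}" "\<lambda>l. rowv A k \<bullet> xk l"] nonpos by force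
      finally have s: "(\<Sum>l\<in>?N. rowv A k \<bullet> xk l) < 0" .
      have "card ?N > 0" using Nne by (simp add: card_gt_0_iff)
      then have "c > 0" unfolding c_def by simp
      then have "rowv A k \<bullet> x0 < 0" unfolding ix0 using s by (simp add: mult_pos_neg)
      then show ?thesis using bk by simp
    qed
  qed
  with x0F show ?thesis by blast
qed


lemma ker_E_span:
  fixes A :: "int^'n::finite^'m::finite" and b :: "int^'m" and I :: "'m set"
  assumes b0: "\<And>i. 0 \<le> b $ i"
  defines "F \<equiv> faceP A b I"
  defines "E \<equiv> {k. \<forall>x\<in>F. rowv A k \<bullet> x = 0}"
  shows "kerRows A E = span F" "I \<subseteq> E"
proof -
  show IE: "I \<subseteq> E" unfolding E_def F_def using faceP_iff by blast
  have FE: "F \<subseteq> kerRows A E" unfolding E_def by (auto simp: kerRows_iff)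
  show "kerRows A E = span F"
  proof
    show "span F \<subseteq> kerRows A E" by (rule span_minimal[OF FE subspace_kerRows])
    show "kerRows A E \<subseteq> span F"
    proof
      fix y assume y: "y \<in> kerRows A E"
      obtain x0 where x0: "x0 \<in> F" "\<And>k. k \<notin> E \<Longrightarrow> rowv A k \<bullet> x0 < real_of_int (b $ k)"
        using interior_point[OF b0, of A I] unfolding F_def E_def by blast
      define s where "s k = real_of_int (b $ k) - rowv A k \<bullet> x0" for k
      define t where "t = Min (insert 1 ((\<lambda>k. s k / (\<bar>rowv A k \<bullet> y\<bar> + 1)) ` (- E)))"
      have fin: "finite (insert 1 ((\<lambda>k. s k / (\<bar>rowv A k \<bullet> y\<bar> + 1)) ` (- E)))" by simp
      have t0: "t > 0" unfolding t_def using x0(2) by (subst Min_gr_iff[OF fin]) (auto simp: s_def)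
      have tle: "t \<le> s k / (\<bar>rowv A k \<bullet> y\<bar> + 1)" if "k \<notin> E" for k
        unfolding t_def using that by (intro Min_le[OF fin]) auto
      define x1 where "x1 = x0 + t *\<^sub>R y"
      have x1F: "x1 \<in> F" unfolding F_def faceP_iff
      proof (intro conjI allI ballI)
        fix i
        show "rowv A i \<bullet> x1 \<le> real_of_int (b $ i)"
        proof (cases "i \<in> E")
          case True
          then have "rowv A i \<bullet> y = 0" using y unfolding kerRows_iff by auto
          then show ?thesis using x0(1) unfolding x1_def F_def faceP_iff by (simp add: inner_add_right)
        next
          case False
          let ?a = "\<bar>rowv A i \<bullet> y\<bar>"
          have sp: "s i > 0" using x0(2)[OF False] unfolding s_def by simp
          have "t * ?a \<le> s i / (?a + 1) * ?a" using tle[OF False] by (intro mult_right_mono) auto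
          also have "\<dots> \<le> s i"
          proof -
            have "?a / (?a + 1) \<le> 1" by simp
            then have "s i * (?a / (?a + 1)) \<le> s i * 1" using sp by (intro mult_left_mono) auto
            then show ?thesis by simp
          qed
          finally have "t * (rowv A i \<bullet> y) \<le> s i" using t0
            by (smt (verit) abs_ge_self mult_left_mono)
          then show ?thesis unfolding x1_def s_def by (simp add: inner_add_right)
        qed
      next
        fix i assume i: "i \<in> I"
        then have "i \<in> E" using IE by auto
        then have "rowv A i \<bullet> y = 0" using y unfolding kerRows_iff by auto
        moreover have "rowv A i \<bullet> x0 = 0" using x0(1) i unfolding F_def faceP_iff by auto
        ultimately show "rowv A i \<bullet> x1 = 0" unfolding x1_def by (simp add: inner_add_right)
      qed
      have "y = (1 / t) *\<^sub>R (x1 - x0)" unfolding x1_def using t0 by simp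
      moreover have "(1 / t) *\<^sub>R (x1 - x0) \<in> span F"
        using x1F x0(1) by (intro span_mul span_diff span_base)
      ultimately show "y \<in> span F" by simp
    qed
  qed
qed


lemma zero_faceP: "(\<And>i. 0 \<le> b $ i) \<Longrightarrow> 0 \<in> faceP A b I"
  unfolding faceP_iff by simp

lemma ker_orth_span:
  fixes A :: "int^'n::finite^'m::finite"
  shows "kerRows A E = {y \<in> UNIV. \<forall>x\<in>span (rowv A ` E). orthogonal x y}"
proof (rule Set.set_eqI, rule iffI)
  fix y assume y: "y \<in> kerRows A E"
  have "orthogonal x y" if "x \<in> span (rowv A ` E)" for x
  proof -
    have "orthogonal y x"
      by (rule orthogonal_to_span[OF that]) (use y in \<open>auto simp: kerRows_iff Linear_Algebra.orthogonal_def inner_commute\<close>)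
    then show ?thesis by (simp add: orthogonal_commute)
  qed
  then show "y \<in> {y \<in> UNIV. \<forall>x\<in>span (rowv A ` E). orthogonal x y}" by simp
next
  fix y assume "y \<in> {y \<in> UNIV. \<forall>x\<in>span (rowv A ` E). orthogonal x y}"
  then show "y \<in> kerRows A E" unfolding kerRows_iff Linear_Algebra.orthogonal_def by (auto intro: span_base)
qed

lemma dim_ker_rows:
  fixes A :: "int^'n::finite^'m::finite"
  shows "dim (kerRows A E) + dim (rowv A ` E) = CARD('n)"
proof -
  have "dim {y \<in> UNIV. \<forall>x\<in>span (rowv A ` E). orthogonal x y} + dim (span (rowv A ` E)) = dim (UNIV :: (real^'n) set)"
    by (rule dim_subspace_orthogonal_to_vectors) auto
  then show ?thesis unfolding ker_orth_span[symmetric] by simp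
qed

lemma kerRows_span_eq:
  fixes A :: "int^'n::finite^'m::finite"
  assumes "rowv A ` E \<subseteq> span (rowv A ` K)" "K \<subseteq> E"
  shows "kerRows A K = kerRows A E"
proof
  show "kerRows A E \<subseteq> kerRows A K"
  proof
    fix x assume "x \<in> kerRows A E"
    then have "\<forall>i\<in>E. rowv A i \<bullet> x = 0" unfolding kerRows_iff .
    then have "\<forall>i\<in>K. rowv A i \<bullet> x = 0" using assms(2) by (meson subsetD)
    then show "x \<in> kerRows A K" unfolding kerRows_iff .
  qed
  show "kerRows A K \<subseteq> kerRows A E"
  proof
    fix x assume x: "x \<in> kerRows A K"
    have "rowv A k \<bullet> x = 0" if k: "k \<in> E" for k
    proof -
      have "orthogonal x (rowv A k)"
        by (rule orthogonal_to_span) (use assms(1) k x in \<open>auto simp: kerRows_iff Linear_Algebra.orthogonal_def inner_commute\<close>)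
      then show ?thesis by (simp add: Linear_Algebra.orthogonal_def inner_commute)
    qed
    then show "x \<in> kerRows A E" unfolding kerRows_iff by auto
  qed
qed

lemma impl:
  fixes A :: "int^'n::finite^'m::finite" and b :: "int^'m" and I :: "'m set"
  assumes b0: "\<And>i. 0 \<le> b $ i" and adm: "admissible A I" and ad: "aff_dim (faceP A b I) = int d"
  obtains K where "I \<subseteq> K" "card K + d = CARD('n)" "inj_on (rowv A) K" "independent (rowv A ` K)"
    "faceP A b I \<subseteq> kerRows A K" "dim (kerRows A K) = d"
proof -
  define F where "F = faceP A b I"
  define E where "E = {k. \<forall>x\<in>F. rowv A k \<bullet> x = 0}"
  have kE: "kerRows A E = span F" and IE: "I \<subseteq> E"
    using ker_E_span[OF b0, where A=A and I=I] unfolding F_def E_def by auto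
  have F0: "0 \<in> F" unfolding F_def by (rule zero_faceP[OF b0])
  have "aff_dim F = int (dim ((+) (- 0) ` F))" by (rule aff_dim_eq_dim) (rule hull_inc[OF F0])
  then have dF: "dim F = d" using ad unfolding F_def by simp
  have dkE: "dim (kerRows A E) = d" using kE dF by simp
  let ?R = "rowv A ` E"
  have dR: "d + dim ?R = CARD('n)" using dim_ker_rows[of A E] dkE by simp
  have IR: "rowv A ` I \<subseteq> ?R" using IE by auto
  obtain B where B: "rowv A ` I \<subseteq> B" "B \<subseteq> ?R" "independent B" "?R \<subseteq> span B"
    using maximal_independent_subset_extend[OF IR adm_indep(2)[OF adm]] by blast
  have spBR: "span B = span ?R" using B(2,4) by (metis span_mono span_span subset_antisym)
  have finB: "finite B" by (rule finite_subset[OF B(2)]) simp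
  have cardB: "card B = dim ?R" using dim_eq_card_independent[OF B(3)] spBR by (metis dim_span)
  define g where "g v = (SOME k. k \<in> E \<and> rowv A k = v)" for v
  have g: "g v \<in> E \<and> rowv A (g v) = v" if "v \<in> B" for v
  proof -
    have "\<exists>k. k \<in> E \<and> rowv A k = v" using that B(2) by auto
    then show ?thesis unfolding g_def by (rule someI_ex)
  qed
  define K where "K = I \<union> g ` (B - rowv A ` I)"
  have IK: "I \<subseteq> K" unfolding K_def by auto
  have KE: "K \<subseteq> E" unfolding K_def using IE g by auto
  have imK: "rowv A ` K = B"
  proof -
    have "rowv A ` g ` (B - rowv A ` I) = B - rowv A ` I" using g by (force simp: image_image)
    then show ?thesis unfolding K_def using B(1) by (auto simp: image_Un)
  qed
  have finK: "finite K" by simp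
  have cI: "card (rowv A ` I) = card I" using card_image[OF adm_indep(1)[OF adm]] .
  have "card K \<le> card I + card (g ` (B - rowv A ` I))" unfolding K_def by (rule card_Un_le)
  also have "\<dots> \<le> card I + card (B - rowv A ` I)" using card_image_le[of "B - rowv A ` I" g] finB by simp
  also have "\<dots> = card B"
  proof -
    have "card (rowv A ` I) \<le> card B" using B(1) finB by (rule card_mono[rotated])
    then show ?thesis using card_Diff_subset[of "rowv A ` I" B] B(1) finB cI
      by (simp add: finite_subset)
  qed
  finally have c1: "card K \<le> card B" .
  have c2: "card B \<le> card K" using card_image_le[OF finK, of "rowv A"] imK by simp
  have cK: "card K = card B" using c1 c2 by simp
  have injK: "inj_on (rowv A) K" using eq_card_imp_inj_on[OF finK, of "rowv A"] imK cK by simp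
  have kK: "kerRows A K = kerRows A E"
    by (rule kerRows_span_eq[OF _ KE]) (use B(4) imK in auto)
  show ?thesis
  proof
    show "I \<subseteq> K" by fact
    show "card K + d = CARD('n)" using cK cardB dR by simp
    show "inj_on (rowv A) K" by fact
    show "independent (rowv A ` K)" using imK B(3) by simp
    show "faceP A b I \<subseteq> kerRows A K" using kK kE span_superset unfolding F_def by auto
    show "dim (kerRows A K) = d" using kK dkE by simp
  qed
qed


definition Klist :: "int^'n^'m \<Rightarrow> 'm set \<Rightarrow> 'm set \<Rightarrow> (int^'n) list" where
  "Klist A I K = Irows A I @ map (\<lambda>i. A $ enum_set (K - I) i) [0..<card (K - I)]"

definition Klist0 :: "int^'n^'m \<Rightarrow> 'm set \<Rightarrow> (int^'n) list" where
  "Klist0 A K = map (\<lambda>i. A $ enum_set K i) [0..<card K]"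

lemma enum_list_props:
  fixes A :: "int^'n::finite^'m::finite"
  assumes inj: "inj_on (\<lambda>i. A $ i) S"
  shows "set (map (\<lambda>i. A $ enum_set S i) [0..<card S]) = (\<lambda>i. A $ i) ` S"
    "distinct (map (\<lambda>i. A $ enum_set S i) [0..<card S])"
proof -
  have bS: "bij_betw (enum_set S) {..<card S} S" by (rule enum_set_bij) simp
  show "set (map (\<lambda>i. A $ enum_set S i) [0..<card S]) = (\<lambda>i. A $ i) ` S"
  proof -
    have "enum_set S ` {0..<card S} = S" using bS unfolding bij_betw_def by (simp add: atLeast0LessThan)
    then show ?thesis by (metis image_image set_map set_upt)
  qed
  have "inj_on ((\<lambda>i. A $ i) \<circ> enum_set S) {0..<card S}"
    using bS inj unfolding bij_betw_def atLeast0LessThan by (intro comp_inj_on) auto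
  then show "distinct (map (\<lambda>i. A $ enum_set S i) [0..<card S])"
    by (simp add: distinct_map comp_def)
qed

lemma Irows_props:
  fixes A :: "int^'n::finite^'m::finite"
  assumes inj: "inj_on (\<lambda>i. A $ i) I"
  shows "set (Irows A I) = (\<lambda>i. A $ i) ` I" "distinct (Irows A I)" "length (Irows A I) = card I"
  using enum_list_props[OF inj] unfolding Irows_def by auto

lemma Klist_props:
  fixes A :: "int^'n::finite^'m::finite"
  assumes IK: "I \<subseteq> K" and inj: "inj_on (\<lambda>i. A $ i) K"
  shows "set (Klist A I K) = (\<lambda>i. A $ i) ` K" "distinct (Klist A I K)" "length (Klist A I K) = card K"
    "mset (Klist A I K) = mset (Klist0 A K)"
proof -
  have injI: "inj_on (\<lambda>i. A $ i) I" using inj IK inj_on_subset by blast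
  have injD: "inj_on (\<lambda>i. A $ i) (K - I)" using inj inj_on_subset by blast
  note P1 = Irows_props[OF injI] and P2 = enum_list_props[OF injD] and P3 = enum_list_props[OF inj]
  show s: "set (Klist A I K) = (\<lambda>i. A $ i) ` K" unfolding Klist_def using P1(1) P2(1) IK by auto
  have "(\<lambda>i. A $ i) ` I \<inter> (\<lambda>i. A $ i) ` (K - I) = {}" using inj IK unfolding inj_on_def by blast
  then show d: "distinct (Klist A I K)" unfolding Klist_def using P1 P2 by auto
  have fK: "finite K" by simp
  show "length (Klist A I K) = card K" unfolding Klist_def using P1(3) IK
    by (simp add: card_Diff_subset finite_subset card_mono)
  show "mset (Klist A I K) = mset (Klist0 A K)"
  proof -
    have "set (Klist0 A K) = set (Klist A I K)" using P3(1) s unfolding Klist0_def by simp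
    moreover have "distinct (Klist0 A K)" using P3(2) unfolding Klist0_def .
    ultimately show ?thesis using d by (simp add: set_eq_iff_mset_eq_distinct)
  qed
qed

lemma absDet_dl:
  fixes A :: "int^'n::finite^'m::finite"
  assumes cK: "card K = CARD('n) - 1"
  shows "absDetAlphaRows \<beta> A K = \<bar>dl (\<beta> # Klist0 A K)\<bar>"
proof -
  have n0: "CARD('n) > 0" by simp
  have "mat CARD('n) CARD('n) (\<lambda>(i,j). if i = 0 then \<beta> $ en j else A $ enum_set K (i - 1) $ en j) = dm (\<beta> # Klist0 A K)"
    unfolding dm_def Klist0_def using cK n0
    by (intro eq_matI) (auto simp: nth_Cons' )
  then show ?thesis unfolding absDetAlphaRows_def ldet_det dl_def en_def by simp
qed

lemma absDet_perm:
  fixes A :: "int^'n::finite^'m::finite"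
  assumes cK: "card K = CARD('n) - 1" and IK: "I \<subseteq> K" and inj: "inj_on (\<lambda>i. A $ i) K"
    and ms: "mset rs = mset (\<beta> # Klist A I K)"
  shows "\<bar>dl rs\<bar> = absDetAlphaRows \<beta> A K"
proof -
  have ms2: "mset rs = mset (\<beta> # Klist0 A K)" using ms Klist_props(4)[OF IK inj] by simp
  have len: "length (\<beta> # Klist0 A K) = CARD('n)" using cK unfolding Klist0_def by simp
  show ?thesis using dl_perm[OF len ms2] absDet_dl[OF cK] by simp
qed

lemma gcd_pos:
  fixes A :: "int^'n::finite^'m::finite"
  assumes adm: "admissible A I"
  shows "gcdRows A I > 0"
proof -
  have injI: "inj_on (\<lambda>i. A $ i) I" using inj_rows_from_rowv[OF adm_indep(1)[OF adm]] .
  have "realV ` set (Irows A I) = rowv A ` I" using Irows_props(1)[OF injI] by (auto simp: image_image)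
  then obtain ys where ys: "length (Irows A I @ ys) = CARD('n)" "dl (Irows A I @ ys) \<noteq> 0"
    using dl_extend[OF Irows_props(2)[OF injI]] adm_indep(2)[OF adm] by auto
  have "gcdRows A I dvd dl (Irows A I @ ys)" by (rule FG[OF adm ys(1)]) simp
  then have "gcdRows A I \<noteq> 0" using ys(2) by auto
  moreover have "gcdRows A I \<ge> 0" unfolding gcdRows_def by simp
  ultimately show ?thesis by simp
qed

lemma Delta_bound:
  fixes A :: "int^'n::finite^'m::finite"
  assumes adm: "admissible A I" and IK: "I \<subseteq> K" and cK: "card K = CARD('n) - 1"
  shows "real_of_int (absDetAlphaRows \<beta> A K) / real_of_int (gcdRows A I) \<le> DeltaI \<beta> A I"
proof -
  let ?S = "{absDetAlphaRows \<beta> A K | K. I \<subseteq> K \<and> card K = CARD('n) - 1}"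
  have fin: "finite ?S"
  proof -
    have "?S \<subseteq> (\<lambda>K. absDetAlphaRows \<beta> A K) ` UNIV" by auto
    then show ?thesis by (rule finite_subset) simp
  qed
  have "absDetAlphaRows \<beta> A K \<in> ?S" using IK cK by blast
  then have "absDetAlphaRows \<beta> A K \<le> Max ?S" using fin by (rule Max_ge[rotated])
  then show ?thesis unfolding DeltaI_def using gcd_pos[OF adm]
    by (intro divide_right_mono) auto
qed


lemma idot_comm: "idot x y = idot y x"
  unfolding idot_def by (simp add: mult.commute)

lemma idot_iu: "idot c (iu k) = c $ k"
  unfolding idot_def iu_def by (simp add: if_distrib cong: if_cong)

lemma line_param:
  fixes S :: "(real^'n::finite) set"
  assumes "subspace S" "dim S = 1" "w \<in> S" "w \<noteq> 0" "v \<in> S"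
  shows "\<exists>t. v = t *\<^sub>R w"
proof -
  have "independent {w}" using assms(4) by simp
  moreover have "dim S \<le> card {w}" using assms(2) by simp
  ultimately have "S \<subseteq> span {w}" using card_ge_dim_independent[of "{w}" S] assms(3) by auto
  then have "v \<in> span {w}" using assms(5) by auto
  then show ?thesis unfolding span_singleton by auto
qed

lemma polyP_scale:
  assumes b0: "\<And>i. 0 \<le> b $ i" and v: "v \<in> polyP A b" and s: "0 \<le> s" "s \<le> 1"
  shows "s *\<^sub>R v \<in> polyP A b"
  unfolding polyP_iff
proof
  fix i
  have "rowv A i \<bullet> v \<le> real_of_int (b $ i)" using v unfolding polyP_iff by auto
  then have "s * (rowv A i \<bullet> v) \<le> s * real_of_int (b $ i)" using s by (intro mult_left_mono)
  also have "\<dots> \<le> real_of_int (b $ i)" using s b0[of i] by (simp add: mult_left_le_one_le)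
  finally show "rowv A i \<bullet> (s *\<^sub>R v) \<le> real_of_int (b $ i)" by simp
qed

lemma realV_scale_div:
  fixes c :: "int^'n::finite"
  assumes "\<And>k. G dvd c $ k" "G \<noteq> 0"
  shows "realV c = real_of_int G *\<^sub>R realV (\<chi> k. c $ k div G)"
proof -
  have "c $ i = G * (c $ i div G)" for i using assms(1)[of i] by simp
  then have "real_of_int (c $ i) = real_of_int G * real_of_int (c $ i div G)" for i by (metis of_int_mult)
  then show ?thesis by (simp add: Finite_Cartesian_Product.vec_eq_iff realV_def)
qed

lemma ML1:
  fixes A :: "int^'n::finite^'m::finite" and b :: "int^'m" and \<beta> :: "int^'n"
  assumes b0: "\<And>i. 0 \<le> b $ i" and intfree: "\<And>z. realV z \<in> polyP A b \<Longrightarrow> z = 0"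
    and adm: "admissible A I" and IK: "I \<subseteq> K" and cK: "card K + 1 = CARD('n)"
    and injK: "inj_on (rowv A) K" and indK: "independent (rowv A ` K)"
    and FK: "faceP A b I \<subseteq> kerRows A K" and dK: "dim (kerRows A K) = 1"
    and v: "v \<in> faceP A b I" and pos: "realV \<beta> \<bullet> v > 0"
  shows "realV \<beta> \<bullet> v < DeltaI \<beta> A I"
proof -
  let ?n = "CARD('n)"
  let ?G = "gcdRows A I"
  define L where "L = Klist A I K"
  have injK': "inj_on (\<lambda>i. A $ i) K" using inj_rows_from_rowv[OF injK] .
  note KP = Klist_props[OF IK injK']
  have lenL: "length L = ?n - 1" using KP(3) cK unfolding L_def by simp
  have n1: "?n - 1 < ?n" by simp
  define rs0 where "rs0 = L @ [0]"
  have len0: "length rs0 = ?n" unfolding rs0_def using lenL by simp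
  define c where "c = cv rs0 (?n - 1)"
  have upd: "rs0[?n - 1 := y] = L @ [y]" for y unfolding rs0_def using lenL by (simp add: list_update_append)
  have dlc: "dl (L @ [y]) = idot c y" for y using dl_linear[OF len0 n1, of y] unfolding upd c_def .
  have lenLy: "length (L @ [y]) = ?n" for y using lenL by simp
  have preL: "(L @ [y]) ! i = A $ enum_set I i" if "i < card I" for i y
  proof -
    have "length (Irows A I) = card I" unfolding Irows_def by simp
    then show ?thesis using that unfolding L_def Klist_def by (simp add: nth_append Irows_def)
  qed
  have cdiv: "?G dvd c $ k" for k
  proof -
    have "?G dvd dl (L @ [iu k])" by (rule FG_list[OF adm lenLy preL])
    then show ?thesis using dlc idot_iu by metis
  qed
  have corth: "idot c (A $ k) = 0" if k: "k \<in> K" for k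
  proof -
    have "A $ k \<in> set L" using KP(1) k unfolding L_def by auto
    then obtain j where j: "j < length L" "L ! j = A $ k" by (auto simp: in_set_conv_nth)
    have "dl (L @ [A $ k]) = 0"
      by (rule dl_eq_rows[OF lenLy, of j "?n - 1"]) (use j lenL in \<open>auto simp: nth_append\<close>)
    then show ?thesis using dlc by simp
  qed
  have Lind: "independent (realV ` set L)" using indK KP(1) unfolding L_def by (simp add: image_image)
  obtain ys where ys: "length (L @ ys) = ?n" "dl (L @ ys) \<noteq> 0"
    using dl_extend[OF _ Lind] KP(2) unfolding L_def by blast
  have npos: "?n > 0" by simp
  have "length ys = 1" using ys(1) lenL npos by (simp only: length_append)
  then obtain y where "ys = [y]" by (metis One_nat_def length_0_conv length_Suc_conv)
  then have "idot c y \<noteq> 0" using ys(2) dlc by simp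
  then have c0: "c \<noteq> 0" unfolding idot_def by auto
  have G0: "?G > 0" by (rule gcd_pos[OF adm])
  define w where "w = (\<chi> k. c $ k div ?G)"
  have cw: "realV c = real_of_int ?G *\<^sub>R realV w" unfolding w_def
    by (rule realV_scale_div) (use cdiv G0 in auto)
  have w0: "realV w \<noteq> 0"
  proof
    assume "realV w = 0"
    then have "realV c = 0" using cw by simp
    moreover have "realV 0 = (0::real^'n)" by (simp add: Finite_Cartesian_Product.vec_eq_iff)
    ultimately have "c = 0" using injD[OF inj_realV] by metis
    with c0 show False by simp
  qed
  have wK: "realV w \<in> kerRows A K" unfolding kerRows_iff
  proof
    fix k assume k: "k \<in> K"
    have "real_of_int ?G * (rowv A k \<bullet> realV w) = rowv A k \<bullet> realV c" using cw by simp
    also have "\<dots> = 0" using corth[OF k] by (simp add: realV_inner idot_comm)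
    finally show "rowv A k \<bullet> realV w = 0" using G0 by simp
  qed
  have vK: "v \<in> kerRows A K" using v FK by auto
  obtain t where t: "v = t *\<^sub>R realV w" using line_param[OF subspace_kerRows dK wK w0 vK] by blast
  have t1: "\<bar>t\<bar> < 1"
  proof (rule ccontr)
    assume "\<not> \<bar>t\<bar> < 1"
    then have t1: "\<bar>t\<bar> \<ge> 1" by simp
    define z where "z = (if t > 0 then w else - w)"
    have rz: "realV z = (1 / \<bar>t\<bar>) *\<^sub>R v" using t1 unfolding z_def t
      by (auto simp: Finite_Cartesian_Product.vec_eq_iff realV_def)
    have "v \<in> polyP A b" using v unfolding faceP_def by auto
    then have "realV z \<in> polyP A b" unfolding rz using t1 by (intro polyP_scale[OF b0]) auto
    then have "z = 0" by (rule intfree)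
    then have "w = 0" unfolding z_def by (auto split: if_splits)
    then show False using w0 by (simp add: realV_def Finite_Cartesian_Product.vec_eq_iff)
  qed
  define q where "q = realV \<beta> \<bullet> realV w"
  have bv: "realV \<beta> \<bullet> v = t * q" unfolding q_def t by simp
  have q0: "q \<noteq> 0" using pos bv by auto
  have "t * q \<le> \<bar>t\<bar> * \<bar>q\<bar>" by (metis abs_ge_self abs_mult)
  also have "\<dots> < \<bar>q\<bar>" using t1 q0 by simp
  finally have lt: "realV \<beta> \<bullet> v < \<bar>q\<bar>" using bv by simp
  have "real_of_int ?G * q = realV \<beta> \<bullet> realV c" unfolding q_def using cw by simp
  also have "\<dots> = real_of_int (dl (L @ [\<beta>]))" using dlc by (simp add: realV_inner idot_comm)
  finally have "\<bar>real_of_int ?G * q\<bar> = \<bar>real_of_int (dl (L @ [\<beta>]))\<bar>" by simp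
  then have Gq: "real_of_int ?G * \<bar>q\<bar> = real_of_int \<bar>dl (L @ [\<beta>])\<bar>"
    using G0 by (simp add: abs_mult)
  have cK': "card K = ?n - 1" using cK by simp
  have "\<bar>dl (L @ [\<beta>])\<bar> = absDetAlphaRows \<beta> A K"
    by (rule absDet_perm[OF cK' IK injK']) (simp add: L_def)
  then have "\<bar>q\<bar> = real_of_int (absDetAlphaRows \<beta> A K) / real_of_int ?G"
    using Gq G0 by (simp add: field_simps)
  also have "\<dots> \<le> DeltaI \<beta> A I" by (rule Delta_bound[OF adm IK cK'])
  finally show ?thesis using lt by simp
qed


lemma ideal_gcd:
  fixes g :: "'n::finite \<Rightarrow> int"
  assumes "\<exists>k. g k \<noteq> 0"
  shows "\<exists>\<gamma> lam. \<gamma> > 0 \<and> \<gamma> = (\<Sum>k\<in>UNIV. lam k * g k) \<and> (\<forall>k. \<gamma> dvd g k)"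
proof -
  define Z where "Z = {x::int. \<exists>lam. x = (\<Sum>k\<in>UNIV. lam k * g k)}"
  have gZ: "g k \<in> Z" for k
  proof -
    have "(\<Sum>j\<in>UNIV. (if j = k then 1 else 0) * g j) = (\<Sum>j\<in>UNIV. if j = k then g j else 0)"
      by (intro sum.cong) auto
    then have "g k = (\<Sum>j\<in>UNIV. (if j = k then 1 else 0) * g j)" by simp
    then show ?thesis unfolding Z_def by (intro CollectI exI[of _ "\<lambda>j. if j = k then 1 else 0"])
  qed
  have Zmul: "a * x \<in> Z" if "x \<in> Z" for a x
  proof -
    from that obtain l where "x = (\<Sum>k\<in>UNIV. l k * g k)" unfolding Z_def by blast
    then have "a * x = (\<Sum>k\<in>UNIV. (a * l k) * g k)" by (simp add: sum_distrib_left mult.assoc)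
    then show ?thesis unfolding Z_def by (intro CollectI exI[of _ "\<lambda>k. a * l k"])
  qed
  have Zdiff: "x - y \<in> Z" if "x \<in> Z" "y \<in> Z" for x y
  proof -
    from that obtain l1 l2 where "x = (\<Sum>k\<in>UNIV. l1 k * g k)" "y = (\<Sum>k\<in>UNIV. l2 k * g k)" unfolding Z_def by blast
    then have "x - y = (\<Sum>k\<in>UNIV. (l1 k - l2 k) * g k)" by (simp add: sum_subtractf left_diff_distrib)
    then show "x - y \<in> Z" unfolding Z_def by (intro CollectI exI[of _ "\<lambda>k. l1 k - l2 k"])
  qed
  obtain k0 where k0: "g k0 \<noteq> 0" using assms by blast
  have "sgn (g k0) * g k0 \<in> Z" by (rule Zmul[OF gZ])
  moreover have "sgn (g k0) * g k0 = int (nat \<bar>g k0\<bar>)" by (simp add: sgn_mult_abs[symmetric] abs_sgn mult.commute sgn_if)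
  ultimately have "int (nat \<bar>g k0\<bar>) \<in> Z" by simp
  moreover have "nat \<bar>g k0\<bar> > 0" using k0 by simp
  ultimately have ex: "\<exists>m. m > 0 \<and> int m \<in> Z" by blast
  define m where "m = (LEAST m. m > 0 \<and> int m \<in> Z)"
  have m: "m > 0 \<and> int m \<in> Z" unfolding m_def by (rule LeastI_ex) fact
  have least: "int m \<le> y" if "y > 0" "y \<in> Z" for y
  proof -
    have "nat y > 0 \<and> int (nat y) \<in> Z" using that by simp
    then have "m \<le> nat y" unfolding m_def by (rule Least_le)
    then show ?thesis using that by simp
  qed
  have dv: "int m dvd g k" for k
  proof -
    define r where "r = g k mod int m"
    have r: "r = g k - (g k div int m) * int m" unfolding r_def by (simp add: minus_div_mult_eq_mod)
    have rZ: "r \<in> Z" unfolding r using Zdiff[OF gZ Zmul[OF conjunct2[OF m]]] .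
    have "0 \<le> r" "r < int m" unfolding r_def using m by auto
    then have "r = 0" using least[of r] rZ by (cases "r > 0") auto
    then show ?thesis unfolding r_def by auto
  qed
  from m obtain lam where "int m = (\<Sum>k\<in>UNIV. lam k * g k)" unfolding Z_def by blast
  then show ?thesis using m dv by (intro exI[of _ "int m"] exI[of _ lam]) auto
qed

lemma dl_lin_iu:
  fixes rs :: "(int^'n::finite) list"
  assumes len: "length rs = CARD('n)" and i: "i < CARD('n)"
  shows "dl (rs[i := y]) = (\<Sum>k\<in>UNIV. y $ k * dl (rs[i := iu k]))"
proof -
  have "dl (rs[i := iu k]) = cv rs i $ k" for k using dl_linear[OF len i, of "iu k"] idot_iu by simp
  then show ?thesis unfolding dl_linear[OF len i] idot_def by (simp add: mult.commute)
qed

lemma ker_span_orth: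
  fixes A :: "int^'n::finite^'m::finite"
  assumes "x \<in> kerRows A K" "a \<in> span (rowv A ` K)"
  shows "a \<bullet> x = 0"
proof -
  have "orthogonal x a"
    by (rule orthogonal_to_span[OF assms(2)]) (use assms(1) in \<open>auto simp: kerRows_iff Linear_Algebra.orthogonal_def inner_commute\<close>)
  then show ?thesis by (simp add: Linear_Algebra.orthogonal_def inner_commute)
qed

lemma rowv_mult: "(realM A *v x) $ i = rowv A i \<bullet> x"
  by (simp add: matrix_vector_mult_def inner_vec_def realM_def realV_def mult.commute)

lemma full_rank_row:
  fixes A :: "int^'n::finite^'m::finite"
  assumes "rank (realM A) = CARD('n)" "x \<noteq> 0"
  shows "\<exists>i. rowv A i \<bullet> x \<noteq> 0"
proof (rule ccontr)
  assume "\<not> ?thesis"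
  then have "realM A *v x = realM A *v 0"
    by (simp add: Finite_Cartesian_Product.vec_eq_iff rowv_mult)
  then have "x = 0" using assms(1) full_rank_injective[of "realM A"] by (metis injD)
  with assms(2) show False by simp
qed




lemma G_idot:
  fixes g :: "int^'n::finite"
  assumes "\<And>k. G * g $ k = f k"
  shows "G * idot g y = (\<Sum>k\<in>UNIV. y $ k * f k)"
  unfolding idot_def sum_distrib_left using assms by (intro sum.cong) (auto simp: algebra_simps)

lemma setup2:
  fixes A :: "int^'n::finite^'m::finite" and \<beta> :: "int^'n"
  assumes adm: "admissible A I" and IK: "I \<subseteq> K" and cK: "card K + 2 = CARD('n)"
    and injK: "inj_on (rowv A) K"
  defines "L \<equiv> Klist A I K"
  shows "\<And>y z. length (L @ [y, z]) = CARD('n)"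
    "\<And>y z. dl (L @ [y, z]) = (\<Sum>k\<in>UNIV. y $ k * dl (L @ [iu k, z]))"
    "\<And>y z. dl (L @ [y, z]) = (\<Sum>k\<in>UNIV. z $ k * dl (L @ [y, iu k]))"
    "\<And>y z. gcdRows A I dvd dl (L @ [y, z])"
    "\<And>k z. k \<in> K \<Longrightarrow> dl (L @ [A $ k, z]) = 0"
    "\<And>k y. k \<in> K \<Longrightarrow> dl (L @ [y, A $ k]) = 0"
    "\<And>y. dl (L @ [y, y]) = 0"
proof -
  let ?n = "CARD('n)"
  have injK': "inj_on (\<lambda>i. A $ i) K" using inj_rows_from_rowv[OF injK] .
  note KP = Klist_props[OF IK injK']
  have lenL: "length L = ?n - 2" using KP(3) cK unfolding L_def by simp
  show len: "length (L @ [y, z]) = ?n" for y z using lenL cK by simp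
  have i1: "?n - 2 < ?n" "?n - 1 < ?n" using cK by auto
  have u1: "(L @ [0, z])[?n - 2 := y] = L @ [y, z]" for y z using lenL
    by (simp add: list_update_append)
  have u2: "(L @ [y, 0])[?n - 1 := z] = L @ [y, z]" for y z using lenL cK
    by (simp add: list_update_append numeral_2_eq_2)
  show "dl (L @ [y, z]) = (\<Sum>k\<in>UNIV. y $ k * dl (L @ [iu k, z]))" for y z
    using dl_lin_iu[OF len i1(1), of 0 z y] unfolding u1 .
  show "dl (L @ [y, z]) = (\<Sum>k\<in>UNIV. z $ k * dl (L @ [y, iu k]))" for y z
    using dl_lin_iu[OF len i1(2), of y 0 z] unfolding u2 .
  have preL: "(L @ [y, z]) ! i = A $ enum_set I i" if "i < card I" for i y z
  proof -
    have "length (Irows A I) = card I" unfolding Irows_def by simp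
    then show ?thesis using that unfolding L_def Klist_def by (simp add: nth_append Irows_def)
  qed
  show "gcdRows A I dvd dl (L @ [y, z])" for y z by (rule FG_list[OF adm len preL])
  show "dl (L @ [A $ k, z]) = 0" if k: "k \<in> K" for k z
  proof -
    have "A $ k \<in> set L" using KP(1) k unfolding L_def by auto
    then obtain j where j: "j < length L" "L ! j = A $ k" by (auto simp: in_set_conv_nth)
    show ?thesis
      by (rule dl_eq_rows[OF len, of j "?n - 2"]) (use j lenL cK in \<open>auto simp: nth_append\<close>)
  qed
  show "dl (L @ [y, A $ k]) = 0" if k: "k \<in> K" for k y
  proof -
    have "A $ k \<in> set L" using KP(1) k unfolding L_def by auto
    then obtain j where j: "j < length L" "L ! j = A $ k" by (auto simp: in_set_conv_nth)
    show ?thesis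
      by (rule dl_eq_rows[OF len, of j "?n - 1"]) (use j lenL cK in \<open>auto simp: nth_append\<close>)
  qed
  show "dl (L @ [y, y]) = 0" for y
    by (rule dl_eq_rows[OF len, of "?n - 2" "?n - 1"]) (use lenL cK in \<open>auto simp: nth_append\<close>)
qed


lemma ML2:
  fixes A :: "int^'n::finite^'m::finite" and b :: "int^'m" and \<beta> :: "int^'n"
  assumes b0: "\<And>i. 0 \<le> b $ i" and intfree: "\<And>z. realV z \<in> polyP A b \<Longrightarrow> z = 0"
    and rk: "rank (realM A) = CARD('n)"
    and adm: "admissible A I" and IK: "I \<subseteq> K" and cK: "card K + 2 = CARD('n)"
    and injK: "inj_on (rowv A) K" and indK: "independent (rowv A ` K)"
    and FK: "faceP A b I \<subseteq> kerRows A K" and dK: "dim (kerRows A K) = 2"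
    and v: "v \<in> faceP A b I" and pos: "realV \<beta> \<bullet> v > 0"
  shows "realV \<beta> \<bullet> v < DeltaI \<beta> A I"
proof -
  let ?n = "CARD('n)"
  let ?G = "gcdRows A I"
  define L where "L = Klist A I K"
  note S = setup2[OF adm IK cK injK, folded L_def]
  have injK': "inj_on (\<lambda>i. A $ i) K" using inj_rows_from_rowv[OF injK] .
  note KP = Klist_props[OF IK injK']
  have lenL: "length L = ?n - 2" using KP(3) cK unfolding L_def by simp
  have G0: "?G > 0" by (rule gcd_pos[OF adm])
  have vK: "v \<in> kerRows A K" using v FK by auto
  define M where "M = realV \<beta> \<bullet> v"
  have M0: "M > 0" using pos unfolding M_def .
  define g where "g = (\<chi> k. dl (L @ [iu k, \<beta>]) div ?G)"
  have Gg: "?G * g $ k = dl (L @ [iu k, \<beta>])" for k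
    unfolding g_def using S(4)[of "iu k" \<beta>] by simp
  have Gidg: "?G * idot g y = dl (L @ [y, \<beta>])" for y
    using G_idot[OF Gg, of y] S(2)[of y \<beta>] by simp
  have gnz: "\<exists>k. g $ k \<noteq> 0"
  proof (rule ccontr)
    assume "\<not> ?thesis"
    then have gz: "\<And>k. g $ k = 0" by simp
    have dz: "dl (L @ [y, \<beta>]) = 0" for y using Gidg[of y] gz unfolding idot_def by simp
    show False
    proof (cases "realV \<beta> \<in> span (rowv A ` K)")
      case True
      have "realV \<beta> \<bullet> v = 0" by (rule ker_span_orth[OF vK True])
      with pos show False by simp
    next
      case False
      have notin: "\<beta> \<notin> set L"
      proof
        assume "\<beta> \<in> set L"
        then have "realV \<beta> \<in> rowv A ` K" using KP(1) unfolding L_def by auto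
        then show False using False by (meson span_base)
      qed
      have dLb: "distinct (L @ [\<beta>])" using KP(2) notin unfolding L_def by simp
      have e1: "realV ` set (L @ [\<beta>]) = insert (realV \<beta>) (rowv A ` K)"
        using KP(1) unfolding L_def by (auto simp: image_image)
      have "independent (insert (realV \<beta>) (rowv A ` K))"
        by (rule independent_insertI[OF False indK])
      then have ind2: "independent (realV ` set (L @ [\<beta>]))" unfolding e1 .
      obtain ys where ys: "length ((L @ [\<beta>]) @ ys) = ?n" "dl ((L @ [\<beta>]) @ ys) \<noteq> 0"
        using dl_extend[OF dLb ind2] by blast
      have "length ys = 1" using ys(1) lenL cK by (simp only: length_append) simp
      then obtain y where y: "ys = [y]" by (metis One_nat_def length_0_conv length_Suc_conv)
      have lenby: "length (L @ [\<beta>, y]) = ?n" using S(1) .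
      have "mset (L @ [y, \<beta>]) = mset (L @ [\<beta>, y])" by simp
      then have "\<bar>dl (L @ [y, \<beta>])\<bar> = \<bar>dl (L @ [\<beta>, y])\<bar>" by (rule dl_perm[OF lenby])
      moreover have "dl (L @ [\<beta>, y]) \<noteq> 0" using ys(2) y by simp
      ultimately show False using dz[of y] by simp
    qed
  qed
  obtain \<gamma> lam where gam: "\<gamma> > 0" "\<gamma> = (\<Sum>k\<in>UNIV. lam k * g $ k)" "\<And>k. \<gamma> dvd g $ k"
    using ideal_gcd[of "\<lambda>k. g $ k", OF gnz] by blast
  define g1 where "g1 = (\<chi> k. g $ k div \<gamma>)"
  have gg1: "g $ k = \<gamma> * g1 $ k" for k unfolding g1_def using gam(3)[of k] by simp
  have idg: "idot g y = \<gamma> * idot g1 y" for y unfolding idot_def gg1 by (simp add: sum_distrib_left mult.assoc)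
  have Gg1: "?G * \<gamma> * idot g1 y = dl (L @ [y, \<beta>])" for y using Gidg[of y] idg[of y] by (simp add: mult.assoc)
  have g1K: "realV g1 \<in> kerRows A K" unfolding kerRows_iff
  proof
    fix l assume l: "l \<in> K"
    have "?G * \<gamma> * idot g1 (A $ l) = 0" using Gg1 S(5)[OF l] by simp
    then have "idot g1 (A $ l) = 0" using G0 gam(1) by simp
    then show "rowv A l \<bullet> realV g1 = 0" by (simp add: realV_inner idot_comm)
  qed
  have g1b: "idot g1 \<beta> = 0"
  proof -
    have "?G * \<gamma> * idot g1 \<beta> = 0" using Gg1 S(7) by simp
    then show ?thesis using G0 gam(1) by simp
  qed
  have g1nz: "realV g1 \<noteq> 0"
  proof
    assume "realV g1 = 0"
    then have "realV g1 $ k = 0" for k by simp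
    then have "g1 $ k = 0" for k by simp
    then show False using gnz gg1 by simp
  qed
  define u where "u = (\<chi> k. (\<Sum>j\<in>UNIV. lam j * dl (L @ [iu j, iu k])) div ?G)"
  have Gu: "?G * u $ k = (\<Sum>j\<in>UNIV. lam j * dl (L @ [iu j, iu k]))" for k
  proof -
    have "?G dvd (\<Sum>j\<in>UNIV. lam j * dl (L @ [iu j, iu k]))" using S(4) by (intro dvd_sum dvd_mult)
    then show ?thesis unfolding u_def by simp
  qed
  have Gidu: "?G * idot u z = (\<Sum>j\<in>UNIV. lam j * dl (L @ [iu j, z]))" for z
  proof -
    have "?G * idot u z = (\<Sum>k\<in>UNIV. z $ k * (\<Sum>j\<in>UNIV. lam j * dl (L @ [iu j, iu k])))"
      by (rule G_idot[OF Gu])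
    also have "\<dots> = (\<Sum>k\<in>UNIV. \<Sum>j\<in>UNIV. z $ k * (lam j * dl (L @ [iu j, iu k])))"
      by (simp add: sum_distrib_left)
    also have "\<dots> = (\<Sum>j\<in>UNIV. \<Sum>k\<in>UNIV. z $ k * (lam j * dl (L @ [iu j, iu k])))"
      by (rule sum.swap)
    also have "\<dots> = (\<Sum>j\<in>UNIV. lam j * (\<Sum>k\<in>UNIV. z $ k * dl (L @ [iu j, iu k])))"
      by (simp add: sum_distrib_left mult.left_commute)
    also have "\<dots> = (\<Sum>j\<in>UNIV. lam j * dl (L @ [iu j, z]))"
      by (intro sum.cong refl) (simp only: S(3)[of "iu _" z, symmetric])
    finally show ?thesis .
  qed
  have uK: "realV u \<in> kerRows A K" unfolding kerRows_iff
  proof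
    fix l assume l: "l \<in> K"
    have "?G * idot u (A $ l) = 0" using Gidu S(6)[OF l] by simp
    then have "idot u (A $ l) = 0" using G0 by simp
    then show "rowv A l \<bullet> realV u = 0" by (simp add: realV_inner idot_comm)
  qed
  have ub: "idot u \<beta> = \<gamma>"
  proof -
    have "?G * idot u \<beta> = (\<Sum>j\<in>UNIV. lam j * (?G * g $ j))" using Gidu[of \<beta>] Gg by simp
    also have "\<dots> = ?G * \<gamma>" using gam(2) by (simp add: sum_distrib_left algebra_simps)
    finally show ?thesis using G0 by simp
  qed
  show ?thesis
  proof (rule ccontr)
    assume "\<not> ?thesis"
    then have DM: "DeltaI \<beta> A I \<le> M" unfolding M_def by simp
    have bnd: "real_of_int \<gamma> * real_of_int \<bar>idot (A $ k) g1\<bar> \<le> M" for k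
    proof (cases "A $ k \<in> set L")
      case True
      then obtain l where l: "l \<in> K" "A $ k = A $ l" using KP(1) unfolding L_def by auto
      have "dl (L @ [A $ k, \<beta>]) = 0" using S(5)[OF l(1)] l(2) by simp
      then have "?G * \<gamma> * idot g1 (A $ k) = 0" using Gg1 by simp
      then have "idot g1 (A $ k) = 0" using G0 gam(1) by simp
      then show ?thesis using M0 by (simp add: idot_comm)
    next
      case False
      then have kK: "k \<notin> K" using KP(1) unfolding L_def by auto
      define K' where "K' = insert k K"
      have cK': "card K' = ?n - 1" unfolding K'_def using cK kK by simp
      have IK': "I \<subseteq> K'" using IK unfolding K'_def by auto
      have nin: "A $ k \<notin> (\<lambda>i. A $ i) ` K" using False KP(1) unfolding L_def by simp
      have injK'': "inj_on (\<lambda>i. A $ i) K'" unfolding K'_def using injK' nin by auto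
      note KP' = Klist_props[OF IK' injK'']
      have dLk: "distinct (L @ [A $ k])" using KP(2) False unfolding L_def by simp
      have sLk: "set (L @ [A $ k]) = set (Klist A I K')" using KP(1) KP'(1) unfolding L_def K'_def by auto
      have "mset (L @ [A $ k]) = mset (Klist A I K')"
        using set_eq_iff_mset_eq_distinct[OF dLk KP'(2)] sLk by blast
      then have ms: "mset (L @ [A $ k, \<beta>]) = mset (\<beta> # Klist A I K')"
        by (metis append.assoc append_Cons append_Nil mset_append mset_single_iff_right add_mset_add_single union_commute mset.simps(2))
      have ad: "\<bar>dl (L @ [A $ k, \<beta>])\<bar> = absDetAlphaRows \<beta> A K'" by (rule absDet_perm[OF cK' IK' injK'' ms])
      have "real_of_int (absDetAlphaRows \<beta> A K') / real_of_int ?G \<le> DeltaI \<beta> A I"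
        by (rule Delta_bound[OF adm IK' cK'])
      moreover have "real_of_int (absDetAlphaRows \<beta> A K') = real_of_int ?G * (real_of_int \<gamma> * real_of_int \<bar>idot (A $ k) g1\<bar>)"
      proof -
        have "absDetAlphaRows \<beta> A K' = \<bar>?G * \<gamma> * idot g1 (A $ k)\<bar>" using ad Gg1 by simp
        also have "\<dots> = ?G * (\<gamma> * \<bar>idot (A $ k) g1\<bar>)" using G0 gam(1) by (simp add: abs_mult idot_comm)
        finally show ?thesis by simp
      qed
      ultimately have "real_of_int \<gamma> * real_of_int \<bar>idot (A $ k) g1\<bar> \<le> DeltaI \<beta> A I"
        using G0 by simp
      then show ?thesis using DM by simp
    qed
    define N where "N = Max (range (\<lambda>k. \<bar>idot (A $ k) g1\<bar>))"
    have Nge: "\<bar>idot (A $ k) g1\<bar> \<le> N" for k unfolding N_def by (rule Max_ge) auto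
    have "N \<in> range (\<lambda>k. \<bar>idot (A $ k) g1\<bar>)" unfolding N_def by (rule Max_in) auto
    then obtain k0 where k0: "N = \<bar>idot (A $ k0) g1\<bar>" by auto
    obtain i0 where "rowv A i0 \<bullet> realV g1 \<noteq> 0" using full_rank_row[OF rk g1nz] by blast
    then have "idot (A $ i0) g1 \<noteq> 0" by (simp add: realV_inner)
    then have N1: "N \<ge> 1" using Nge[of i0] by linarith
    have gN: "real_of_int \<gamma> * real_of_int N \<le> M" using bnd[of k0] k0 by simp
    have bg1: "realV \<beta> \<bullet> realV g1 = 0" using g1b by (simp add: realV_inner idot_comm)
    have nsp: "v \<notin> span {realV g1}"
    proof
      assume "v \<in> span {realV g1}"
      then obtain t where "v = t *\<^sub>R realV g1" unfolding span_singleton by auto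
      then have "realV \<beta> \<bullet> v = 0" using bg1 by simp
      with pos show False by simp
    qed
    have ind2: "independent (insert v {realV g1})"
      by (rule independent_insertI[OF nsp]) (use g1nz in simp)
    have vg: "v \<noteq> realV g1" using pos bg1 by auto
    have kerspan: "kerRows A K \<subseteq> span (insert v {realV g1})"
      by (rule card_ge_dim_independent) (use vK g1K ind2 vg dK in auto)
    define e where "e = realV u - (real_of_int \<gamma> / M) *\<^sub>R v"
    have eK: "e \<in> kerRows A K" unfolding e_def
      by (rule subspace_diff[OF subspace_kerRows uK subspace_scale[OF subspace_kerRows vK]])
    have bu: "realV \<beta> \<bullet> realV u = real_of_int \<gamma>" using ub by (simp add: realV_inner idot_comm)
    have be: "realV \<beta> \<bullet> e = 0" unfolding e_def using bu M0 by (simp add: inner_diff_right M_def)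
    obtain a where "e - a *\<^sub>R v \<in> span {realV g1}" using kerspan eK span_breakdown_eq by blast
    then obtain r where er: "e - a *\<^sub>R v = r *\<^sub>R realV g1" unfolding span_singleton by auto
    have "realV \<beta> \<bullet> (e - a *\<^sub>R v) = 0" unfolding er using bg1 by simp
    then have "a * M = 0" using be unfolding M_def by (simp add: inner_diff_right)
    then have a0: "a = 0" using M0 by simp
    have eu: "realV u = r *\<^sub>R realV g1 + (real_of_int \<gamma> / M) *\<^sub>R v" using er a0 unfolding e_def by (simp add: diff_eq_eq)
    have Nn: "nat N > 0" using N1 by simp
    obtain h k where hk: "0 < k" "k \<le> int (nat N)" "\<bar>real_of_int k * r - real_of_int h\<bar> < 1 / real (nat N)"
      using Dirichlet_approx[OF Nn, of r] by blast
    have kN: "k \<le> N" using hk(2) N1 by simp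
    define z where "z = (\<chi> j. k * u $ j - h * g1 $ j)"
    have rz: "realV z = (real_of_int k * real_of_int \<gamma> / M) *\<^sub>R v + (real_of_int k * r - real_of_int h) *\<^sub>R realV g1"
    proof -
      have "realV z = real_of_int k *\<^sub>R realV u - real_of_int h *\<^sub>R realV g1"
        unfolding z_def by (simp add: Finite_Cartesian_Product.vec_eq_iff realV_def)
      also have "\<dots> = (real_of_int k * real_of_int \<gamma> / M) *\<^sub>R v + (real_of_int k * r - real_of_int h) *\<^sub>R realV g1"
        unfolding eu by (simp add: algebra_simps)
      finally show ?thesis .
    qed
    have zb: "idot z \<beta> = k * \<gamma>"
    proof -
      have "idot z \<beta> = k * idot u \<beta> - h * idot g1 \<beta>"
        unfolding z_def idot_def by (simp add: algebra_simps sum_subtractf sum_distrib_left)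
      then show ?thesis using ub g1b by simp
    qed
    have znz: "z \<noteq> 0"
    proof
      assume "z = 0"
      then have "idot z \<beta> = 0" unfolding idot_def by simp
      then show False using zb hk(1) gam(1) by simp
    qed
    have "realV z \<in> polyP A b" unfolding polyP_iff
    proof
      fix i
      define s where "s = real_of_int k * real_of_int \<gamma> / M"
      have s0: "0 \<le> s" unfolding s_def using hk(1) gam(1) M0 by simp
      have "real_of_int k * real_of_int \<gamma> \<le> real_of_int N * real_of_int \<gamma>"
        using kN gam(1) by (intro mult_right_mono) auto
      then have "real_of_int k * real_of_int \<gamma> \<le> M" using gN by (simp add: mult.commute)
      then have s1: "s \<le> 1" unfolding s_def using M0 by simp
      have vi: "rowv A i \<bullet> v \<le> real_of_int (b $ i)" using v unfolding faceP_iff by auto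
      have p1: "s * (rowv A i \<bullet> v) \<le> real_of_int (b $ i)"
      proof -
        have "s * (rowv A i \<bullet> v) \<le> s * real_of_int (b $ i)" using vi s0 by (intro mult_left_mono)
        also have "\<dots> \<le> real_of_int (b $ i)" using s0 s1 b0[of i] by (simp add: mult_left_le_one_le)
        finally show ?thesis .
      qed
      define q where "q = real_of_int k * r - real_of_int h"
      have gi: "\<bar>rowv A i \<bullet> realV g1\<bar> \<le> real_of_int N" using Nge[of i] by (simp add: realV_inner)
      have "q * (rowv A i \<bullet> realV g1) \<le> \<bar>q\<bar> * \<bar>rowv A i \<bullet> realV g1\<bar>" by (metis abs_ge_self abs_mult)
      also have "\<dots> \<le> \<bar>q\<bar> * real_of_int N" using gi by (intro mult_left_mono) auto
      also have "\<dots> < (1 / real (nat N)) * real_of_int N" using hk(3) N1 unfolding q_def by (intro mult_strict_right_mono) auto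
      also have "\<dots> = 1" using N1 by simp
      finally have p2: "q * (rowv A i \<bullet> realV g1) < 1" .
      have "rowv A i \<bullet> realV z = s * (rowv A i \<bullet> v) + q * (rowv A i \<bullet> realV g1)"
        unfolding rz s_def q_def by (simp add: inner_add_right)
      then have "real_of_int (idot (A $ i) z) < real_of_int (b $ i) + 1" using p1 p2 by (simp add: realV_inner)
      then have "idot (A $ i) z \<le> b $ i" by linarith
      then show "rowv A i \<bullet> realV z \<le> real_of_int (b $ i)" by (simp add: realV_inner)
    qed
    then have "z = 0" by (rule intfree)
    with znz show False by simp
  qed
qed




lemma bound_d:
  fixes A :: "int^'n::finite^'m::finite" and b :: "int^'m" and \<beta> :: "int^'n"
  assumes b0: "\<And>i. 0 \<le> b $ i" and intfree: "\<And>z. realV z \<in> polyP A b \<Longrightarrow> z = 0"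
    and rk: "rank (realM A) = CARD('n)"
    and adm: "admissible A I" and ad: "aff_dim (faceP A b I) = int d" and d: "d = 1 \<or> d = 2"
    and v: "v \<in> faceP A b I" and pos: "realV \<beta> \<bullet> v > 0"
  shows "realV \<beta> \<bullet> v < DeltaI \<beta> A I"
proof -
  obtain K where K: "I \<subseteq> K" "card K + d = CARD('n)" "inj_on (rowv A) K" "independent (rowv A ` K)"
    "faceP A b I \<subseteq> kerRows A K" "dim (kerRows A K) = d"
    using impl[OF b0 adm ad] by blast
  from d show ?thesis
  proof
    assume "d = 1"
    then show ?thesis using ML1[OF b0 intfree adm K(1) _ K(3,4,5) _ v pos] K(2,6) by simp
  next
    assume "d = 2"
    then show ?thesis using ML2[OF b0 intfree rk adm K(1) _ K(3,4,5) _ v pos] K(2,6) by simp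
  qed
qed

lemma realV_iu_inner: "realV (iu j) \<bullet> v = v $ j"
  unfolding realV_iu by (simp add: inner_axis' inner_commute cart_eq_inner_axis)

lemma realV_neg_iu_inner: "realV (- iu j) \<bullet> v = - (v $ j)"
proof -
  have "realV (- iu j) = - realV (iu j)" by (simp add: Finite_Cartesian_Product.vec_eq_iff realV_def)
  then show ?thesis using realV_iu_inner[of j v] by simp
qed

lemma faceP_closed: "closed (faceP A b I)"
proof -
  have "faceP A b I = (\<Inter>i. {x. rowv A i \<bullet> x \<le> real_of_int (b $ i)}) \<inter> (\<Inter>i\<in>I. {x. rowv A i \<bullet> x = 0})"
    by (auto simp: faceP_iff)
  moreover have "closed ((\<Inter>i. {x. rowv A i \<bullet> x \<le> real_of_int (b $ i)}) \<inter> (\<Inter>i\<in>I. {x. rowv A i \<bullet> x = 0}))"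
    by (intro closed_Int closed_INT ballI closed_halfspace_le closed_hyperplane)
  ultimately show ?thesis by simp
qed

lemma prox_d:
  fixes A :: "int^'n::finite^'m::finite" and b :: "int^'m" and \<alpha> :: "int^'n"
  assumes b0: "\<And>i. 0 \<le> b $ i" and intfree: "\<And>z. realV z \<in> polyP A b \<Longrightarrow> z = 0"
    and rk: "rank (realM A) = CARD('n)" and d: "d = 1 \<or> d = 2"
  shows "prox_lt_one A b \<alpha> (int d)"
  unfolding prox_lt_one_def
proof (intro allI impI, elim conjE)
  fix I assume adm: "admissible A I" and ad: "aff_dim (faceP A b I) = int d"
  have Mb: "realV \<beta> \<bullet> v < DeltaI \<beta> A I" if "v \<in> faceP A b I" "realV \<beta> \<bullet> v > 0" for \<beta> v
    by (rule bound_d[OF b0 intfree rk adm ad d that])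
  let ?F = "faceP A b I"
  define C where "C j = max 0 (max (DeltaI (iu j) A I) (DeltaI (- iu j) A I))" for j
  have comp: "\<bar>x $ j\<bar> \<le> C j" if x: "x \<in> ?F" for x j
  proof (cases "x $ j > 0")
    case True
    then have "x $ j < DeltaI (iu j) A I" using Mb[OF x, of "iu j"] by (simp add: realV_iu_inner)
    then show ?thesis unfolding C_def using True by simp
  next
    case False
    show ?thesis
    proof (cases "x $ j < 0")
      case True
      then have "- x $ j < DeltaI (- iu j) A I" using Mb[OF x, of "- iu j"] by (simp add: realV_neg_iu_inner)
      then show ?thesis unfolding C_def using True by simp
    next
      case False
      then show ?thesis using \<open>\<not> x $ j > 0\<close> unfolding C_def by simp
    qed
  qed
  have bnd: "bounded ?F"
    unfolding bounded_iff
  proof (intro exI ballI)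
    fix x assume "x \<in> ?F"
    then have "(\<Sum>j\<in>UNIV. \<bar>x $ j\<bar>) \<le> (\<Sum>j\<in>UNIV. C j)" by (intro sum_mono comp)
    then show "norm x \<le> (\<Sum>j\<in>UNIV. C j)" using norm_le_l1_cart[of x] by linarith
  qed
  have cpt: "compact ?F" using bnd faceP_closed compact_eq_bounded_closed by blast
  have F0: "0 \<in> ?F" by (rule zero_faceP[OF b0])
  have ne: "?F \<noteq> {}" using F0 by blast
  have ct: "continuous_on ?F (\<lambda>y. realV \<alpha> \<bullet> y)" by (intro continuous_intros)
  obtain x where x: "x \<in> ?F" "\<And>y. y \<in> ?F \<Longrightarrow> realV \<alpha> \<bullet> y \<le> realV \<alpha> \<bullet> x"
    using continuous_attains_sup[OF cpt ne ct] by blast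
  have ge0: "realV \<alpha> \<bullet> x \<ge> 0" using x(2)[OF F0] by simp
  show "\<exists>p. is_proxI A b \<alpha> I p \<and> p < 1"
  proof (cases "realV \<alpha> \<bullet> x > 0")
    case True
    have lt: "realV \<alpha> \<bullet> x < DeltaI \<alpha> A I" by (rule Mb[OF x(1) True])
    then have D0: "DeltaI \<alpha> A I > 0" using True by linarith
    define p where "p = (realV \<alpha> \<bullet> x) / DeltaI \<alpha> A I"
    have pD: "p * DeltaI \<alpha> A I = realV \<alpha> \<bullet> x" unfolding p_def using D0 by simp
    have "p < 1" unfolding p_def using lt D0 by simp
    moreover have "is_proxI A b \<alpha> I p" unfolding is_proxI_def pD using x by blast
    ultimately show ?thesis by blast
  next
    case False
    then have x0: "realV \<alpha> \<bullet> x = 0" using ge0 by simp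
    have "is_proxI A b \<alpha> I 0" unfolding is_proxI_def using x x0 by auto
    then show ?thesis by auto
  qed
qed

theorem lemma3:
  fixes A :: "int^'n^'m" and b :: "int^'m" and \<alpha> :: "int^'n"
  assumes "rank (realM A) = CARD('n)"
    and "\<alpha> \<noteq> 0"
    and "{x \<in> polyP A b. \<forall>j. x $ j \<in> \<int>} = {0}"
  shows "prox_lt_one A b \<alpha> 1 \<and> prox_lt_one A b \<alpha> 2"
proof -
  have P0: "0 \<in> polyP A b" using assms(3) by blast
  have b0: "0 \<le> b $ i" for i using P0 unfolding polyP_iff by simp
  have intfree: "z = 0" if z: "realV z \<in> polyP A b" for z
  proof -
    have "realV z \<in> {x \<in> polyP A b. \<forall>j. x $ j \<in> \<int>}" using z by simp
    then have "realV z = 0" using assms(3) by blast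
    then have "realV z $ j = 0" for j by simp
    then show ?thesis by (simp add: Finite_Cartesian_Product.vec_eq_iff)
  qed
  have "prox_lt_one A b \<alpha> (int 1)" using prox_d[OF b0 intfree assms(1), of 1] by simp
  moreover have "prox_lt_one A b \<alpha> (int 2)" using prox_d[OF b0 intfree assms(1), of 2] by simp
  ultimately show ?thesis by simp
qed

end
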